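(* Let $\|\cdot\|$ be a norm on $\mathbb{R}^d$, let $\mathbf{X}_1,\dots,\mathbf{X}_n$ be i.i.d. random vectors in $\mathbb{R}^d$ with parent vector $\mathbf{X}$ such that the cdf of $\|\mathbf{X}\|$ is absolutely continuous, and let $\mathbf{X}_{(1)},\dots,\mathbf{X}_{(n)}$ be their order statistics with respect to the norm. Then, for $y>0$, the distribution of $(\mathbf{X}_{(1)},\dots,\mathbf{X}_{(n-1)})$ conditionally on the event $\{\|\mathbf{X}_{(n)}\|=y\}$ is the distribution of the norm-ordered statistics $(\mathbf{Y}_{(1)},\dots,\mathbf{Y}_{(n-1)})$ of $n-1$ i.i.d. random vectors $\mathbf{Y}_1,\dots,\mathbf{Y}_{n-1}$ with distribution $F_{\mathbf{X}|\|\mathbf{X}\|}(\cdot\,|\,y)$: $$\mathcal{L}\big(\mathbf{X}_{(1)},\dots,\mathbf{X}_{(n-1)}\mid\|\mathbf{X}_{(n)}\|=y\big)=\mathcal{L}\big(\mathbf{Y}_{(1)},\dots,\mathbf{Y}_{(n-1)}\big).$$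
   Context: The norm-ordered statistics are the reordering of $\mathbf{X}_1,\dots,\mathbf{X}_n$ satisfying $\|\mathbf{X}_{(1)}\|\le\dots\le\|\mathbf{X}_{(n)}\|$. The truncated distribution is $F_{\mathbf{X}|\|\mathbf{X}\|}(\mathbf{B}\,|\,y)=\mathbb{P}(\mathbf{X}\in\mathbf{B}\mid\|\mathbf{X}\|\le y)$ for Borel $\mathbf{B}\subset\mathbb{R}^d$. $\mathcal{L}(\cdot)$ denotes the law; conditioning on the null event $\{\|\mathbf{X}_{(n)}\|=y\}$ is understood in the sense of regular conditional distributions. *)

theory Defs
  imports "HOL-Probability.Probability"
begin

definition is_norm :: "('a::real_vector \<Rightarrow> real) \<Rightarrow> bool" where
  "is_norm N \<longleftrightarrow> (\<forall>x. 0 \<le> N x) \<and> (\<forall>x. N x = 0 \<longleftrightarrow> x = 0)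
     \<and> (\<forall>c x. N (c *\<^sub>R x) = \<bar>c\<bar> * N x) \<and> (\<forall>x y. N (x + y) \<le> N x + N y)"

definition abs_continuous_fun :: "(real \<Rightarrow> real) \<Rightarrow> bool" where
  "abs_continuous_fun F \<longleftrightarrow>
     (\<forall>e>0. \<exists>d>0. \<forall>(m::nat) (a::nat \<Rightarrow> real) b.
        (\<forall>k<m. a k \<le> b k) \<and> (\<forall>k<m. \<forall>l<m. k \<noteq> l \<longrightarrow> b k \<le> a l \<or> b l \<le> a k)
        \<and> (\<Sum>k<m. b k - a k) < d \<longrightarrow> (\<Sum>k<m. \<bar>F (b k) - F (a k)\<bar>) < e)"

text \<open>Norm-ordered statistics of x 0, ..., x (n-1): stable sort by the norm N
  (ties, a null event here, broken by index). Result is extensional on {..<n}.\<close>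
definition norm_order :: "('a \<Rightarrow> real) \<Rightarrow> nat \<Rightarrow> (nat \<Rightarrow> 'a) \<Rightarrow> (nat \<Rightarrow> 'a)" where
  "norm_order N n x = (let xs = sort_key N (map x [0..<n]) in
      (\<lambda>i. if i < n then xs ! i else undefined))"

definition trunc_law :: "'w measure \<Rightarrow> ('w \<Rightarrow> 'a::topological_space) \<Rightarrow> ('a \<Rightarrow> real) \<Rightarrow> real \<Rightarrow> 'a measure" where
  "trunc_law M X N y = measure_of UNIV (sets borel)
     (\<lambda>B. ennreal (measure M {w \<in> space M. X w \<in> B \<and> N (X w) \<le> y}
                   / measure M {w \<in> space M. N (X w) \<le> y}))"

end

theory Submission
  imports Defs
begin

lemma insort_key_cong':
  "(\<forall>b\<in>set ys. (f a \<le> f b) = (g a \<le> g b)) \<Longrightarrow> insort_key f a ys = insort_key g a ys"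
  by (induction ys) auto

lemma sort_key_cong':
  "(\<forall>a\<in>set xs. \<forall>b\<in>set xs. (f a \<le> f b) = (g a \<le> g b)) \<Longrightarrow> sort_key f xs = sort_key g xs"
proof (induction xs)
  case Nil then show ?case by simp
next
  case (Cons a xs)
  then have "sort_key f xs = sort_key g xs" by simp
  moreover have "insort_key f a (sort_key g xs) = insort_key g a (sort_key g xs)"
    using Cons.prems by (intro insort_key_cong') auto
  ultimately show ?case by simp
qed

lemma insort_key_map:
  "insort_key f (g a) (map g ys) = map g (insort_key (f \<circ> g) a ys)"
  by (induction ys) auto

lemma sort_key_map':
  "sort_key f (map g xs) = map g (sort_key (f \<circ> g) xs)"
  proof (induction xs)
  case (Cons a xs)
  show ?case using Cons.IH insort_key_map[of f g a] by (simp add: comp_def)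
qed simp

lemma insort_key_snoc:
  "(f a :: 'b::linorder) < f m \<Longrightarrow> insort_key f a (ys @ [m]) = insort_key f a ys @ [m]"
  by (induction ys) auto

lemma sort_key_snoc_max:
  "(\<forall>x\<in>set xs. (f x :: 'b::linorder) < f m) \<Longrightarrow> sort_key f (xs @ [m]) = sort_key f xs @ [m]"
  by (induction xs) (auto simp: insort_key_snoc)

lemma norm_order_alt:
  "norm_order N n x = (\<lambda>i\<in>{..<n}. x (sort_key (\<lambda>j. N (x j)) [0..<n] ! i))"
  unfolding norm_order_def Let_def
  by (auto simp: sort_key_map'[of N x] o_def length_sort)

lemma norm_order_snoc:
  assumes "\<forall>i<m. N (x i) < N z"
  shows "norm_order N (Suc m) (x(m := z)) = (\<lambda>i. if i < m then norm_order N m x i else if i = m then z else undefined)"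
proof -
  have "map (x(m := z)) [0..<Suc m] = map x [0..<m] @ [z]" by simp
  moreover have "sort_key N (map x [0..<m] @ [z]) = sort_key N (map x [0..<m]) @ [z]"
    using assms by (intro sort_key_snoc_max) auto
  ultimately have e: "sort_key N (map (x(m := z)) [0..<Suc m]) = sort_key N (map x [0..<m]) @ [z]"
    by simp
  show ?thesis
  proof (rule ext)
    fix i
    show "norm_order N (Suc m) (x(m := z)) i = (if i < m then norm_order N m x i else if i = m then z else undefined)"
    proof -
      have l: "length (sort_key N (map x [0..<m])) = m" by (simp only: length_sort length_map length_upt diff_zero)
      show ?thesis
        unfolding norm_order_def Let_def e
        using l by (cases "i < m"; cases "i = m") (simp_all only: nth_append if_True if_False, auto)
    qed
  qed
qed

lemma norm_order_perm:
  assumes inj: "inj_on (\<lambda>i. N (x i)) {..<n}" and sig: "bij_betw \<sigma> {..<n} {..<n}"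
  shows "norm_order N n (\<lambda>i. x (\<sigma> i)) = norm_order N n x"
proof -
  have d: "distinct (map \<sigma> [0..<n])" using sig
    by (simp add: distinct_map bij_betw_def inj_on_subset atLeast0LessThan)
  have "set (map \<sigma> [0..<n]) = {..<n}" using sig by (auto simp: bij_betw_def atLeast0LessThan)
  then have "mset (map \<sigma> [0..<n]) = mset [0..<n]"
    using d by (subst set_eq_iff_mset_eq_distinct[symmetric]) (auto simp: atLeast0LessThan)
  then have ms: "mset (map (\<lambda>i. x (\<sigma> i)) [0..<n]) = mset (map x [0..<n])"
  proof -
    assume h: "mset (map \<sigma> [0..<n]) = mset [0..<n]"
    have "map (\<lambda>i. x (\<sigma> i)) [0..<n] = map x (map \<sigma> [0..<n])" by simp
    then have "mset (map (\<lambda>i. x (\<sigma> i)) [0..<n]) = image_mset x (mset (map \<sigma> [0..<n]))"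
      by (simp only: mset_map)
    also have "\<dots> = mset (map x [0..<n])" by (simp only: h mset_map[symmetric])
    finally show ?thesis .
  qed
  have "sort_key N (map x [0..<n]) = sort_key N (map (\<lambda>i. x (\<sigma> i)) [0..<n])"
  proof (rule sort_key_inj_key_eq)
    show "mset (map x [0..<n]) = mset (sort_key N (map (\<lambda>i. x (\<sigma> i)) [0..<n]))"
      using ms by simp
    show "inj_on N (set (map x [0..<n]))" using inj
      unfolding inj_on_def by (simp add: atLeast0LessThan) blast
  qed (rule sorted_sort_key)
  then show ?thesis unfolding norm_order_def by simp
qed

lemma is_norm_zero: "is_norm N \<Longrightarrow> N 0 = 0"
  unfolding is_norm_def by auto

lemma is_norm_sum: assumes "is_norm N" "finite S" shows "N (\<Sum>b\<in>S. f b) \<le> (\<Sum>b\<in>S. N (f b))"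
  using assms(2)
proof (induction S rule: finite_induct)
  case empty then show ?case using is_norm_zero[OF assms(1)] by simp
next
  case (insert a S)
  have "N (f a + (\<Sum>b\<in>S. f b)) \<le> N (f a) + N (\<Sum>b\<in>S. f b)"
    using assms(1) unfolding is_norm_def by blast
  then show ?case using insert by simp
qed

lemma is_norm_bound:
  fixes N :: "'a::euclidean_space \<Rightarrow> real"
  assumes "is_norm N"
  shows "\<exists>C\<ge>0. \<forall>x. N x \<le> C * norm x"
proof (intro exI[of _ "\<Sum>b\<in>Basis. N b"] conjI allI)
  show "0 \<le> (\<Sum>b\<in>Basis. N b)" using assms unfolding is_norm_def by (simp add: sum_nonneg)
  fix x :: 'a
  have "N x = N (\<Sum>b\<in>Basis. (x \<bullet> b) *\<^sub>R b)" by (simp add: euclidean_representation)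
  also have "\<dots> \<le> (\<Sum>b\<in>Basis. N ((x \<bullet> b) *\<^sub>R b))" by (rule is_norm_sum[OF assms]) simp
  also have "\<dots> = (\<Sum>b\<in>Basis. \<bar>x \<bullet> b\<bar> * N b)" using assms unfolding is_norm_def by simp
  also have "\<dots> \<le> (\<Sum>b\<in>Basis. norm x * N b)"
    using assms unfolding is_norm_def by (intro sum_mono mult_right_mono Basis_le_norm) auto
  finally show "N x \<le> (\<Sum>b\<in>Basis. N b) * norm x" by (simp add: sum_distrib_left mult.commute)
qed

lemma is_norm_lip:
  fixes N :: "'a::euclidean_space \<Rightarrow> real"
  assumes "is_norm N"
  shows "\<exists>C\<ge>0. \<forall>x y. \<bar>N x - N y\<bar> \<le> C * norm (x - y)"
proof -
  obtain C where C: "C \<ge> 0" "\<And>x. N x \<le> C * norm x" using is_norm_bound[OF assms] by blast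
  have tri: "N (a + b) \<le> N a + N b" for a b using assms unfolding is_norm_def by blast
  have neg: "N (- a) = N a" for a
    using assms unfolding is_norm_def by (metis abs_minus_cancel abs_one mult_1 scaleR_minus1_left)
  have "\<bar>N x - N y\<bar> \<le> C * norm (x - y)" for x y
  proof -
    have "N x \<le> N (x - y) + N y" using tri[of "x - y" y] by simp
    moreover have "N y \<le> N (y - x) + N x" using tri[of "y - x" x] by simp
    moreover have "N (y - x) = N (x - y)" using neg[of "x - y"] by simp
    moreover have "N (x - y) \<le> C * norm (x - y)" by (rule C)
    ultimately show ?thesis by linarith
  qed
  then show ?thesis using C by blast
qed

lemma is_norm_continuous:
  fixes N :: "'a::euclidean_space \<Rightarrow> real"
  assumes "is_norm N"
  shows "continuous_on UNIV N"
proof -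
  obtain C where C: "C \<ge> 0" "\<And>x y. \<bar>N x - N y\<bar> \<le> C * norm (x - y)" using is_norm_lip[OF assms] by blast
  show ?thesis unfolding continuous_on_iff
  proof (intro ballI allI impI)
    fix x :: 'a and e :: real assume e: "e > 0"
    show "\<exists>d>0. \<forall>x'\<in>UNIV. dist x' x < d \<longrightarrow> dist (N x') (N x) < e"
    proof (intro exI[of _ "e / (C + 1)"] conjI ballI impI)
      show "e / (C + 1) > 0" using e C by simp
      fix x' assume "dist x' x < e / (C + 1)"
      then have "norm (x' - x) * (C + 1) < e" using C by (simp add: dist_norm pos_less_divide_eq)
      moreover have "\<bar>N x' - N x\<bar> \<le> C * norm (x' - x)" by (rule C)
      moreover have "C * norm (x' - x) \<le> norm (x' - x) * (C + 1)" by (simp add: algebra_simps)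
      ultimately show "dist (N x') (N x) < e" by (simp add: dist_real_def)
    qed
  qed
qed

lemma is_norm_measurable:
  fixes N :: "'a::euclidean_space \<Rightarrow> real"
  assumes "is_norm N"
  shows "N \<in> borel_measurable borel"
  by (rule borel_measurable_continuous_onI[OF is_norm_continuous[OF assms]])

lemma norm_order_measurable:
  assumes Nm: "N \<in> borel_measurable K"
  shows "norm_order N n \<in> PiM {..<n} (\<lambda>_. K) \<rightarrow>\<^sub>M PiM {..<n} (\<lambda>_. K)"
proof -
  let ?P = "PiM {..<n} (\<lambda>_. K)"
  define p where "p x = sort_key (\<lambda>j. N (x j)) [0..<n]" for x :: "nat \<Rightarrow> 'a"
  define L where "L = {ps. set ps \<subseteq> {..<n} \<and> length ps = n}"
  define c where "c x = {(j,k). j<n \<and> k<n \<and> N (x j) \<le> N (x k)}" for x :: "nat \<Rightarrow> 'a"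
  have finL: "finite L" unfolding L_def by (rule finite_lists_length_eq) simp
  have cong: "p x = p x'" if "c x = c x'" for x x'
    unfolding p_def
  proof (rule sort_key_cong', intro ballI)
    fix a b assume "a \<in> set [0..<n]" "b \<in> set [0..<n]"
    then have "a < n" "b < n" by auto
    then show "(N (x a) \<le> N (x b)) = (N (x' a) \<le> N (x' b))"
      using that unfolding c_def by (auto simp: set_eq_iff)
  qed
  have pL: "p x \<in> L" for x
    unfolding p_def L_def by (auto simp: length_sort)
  note [measurable] = Nm
  have cR: "{x \<in> space ?P. c x = R} \<in> sets ?P" if R: "R \<subseteq> {..<n} \<times> {..<n}" for R
  proof -
    have "{x \<in> space ?P. c x = R} = {x \<in> space ?P. \<forall>j\<in>{..<n}. \<forall>k\<in>{..<n}. ((j,k)\<in>R) = (N (x j) \<le> N (x k))}"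
      using R unfolding c_def by (auto simp: set_eq_iff)
    also have "\<dots> \<in> sets ?P"
    proof -
      have m: "(\<lambda>x. N (x j)) \<in> borel_measurable ?P" if "j \<in> {..<n}" for j
        by (rule measurable_compose[OF measurable_component_singleton[OF that] Nm])
      have le: "Measurable.pred ?P (\<lambda>x. N (x j) \<le> N (x k))" if "j \<in> {..<n}" "k \<in> {..<n}" for j k
        unfolding Measurable.pred_def by (rule borel_measurable_le[OF m[OF that(1)] m[OF that(2)]])
      have "Measurable.pred ?P (\<lambda>x. \<forall>j\<in>{..<n}. \<forall>k\<in>{..<n}. ((j,k)\<in>R) = (N (x j) \<le> N (x k)))"
        apply (intro pred_intros_finite finite_lessThan pred_intros_logic le)
        apply (auto simp: Measurable.pred_def)
        done
      then show ?thesis by (simp add: Measurable.pred_def)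
    qed
    finally show ?thesis .
  qed
  have pm: "p \<in> ?P \<rightarrow>\<^sub>M count_space L"
  proof (subst measurable_count_space_eq2[OF finL], intro conjI ballI)
    show "p \<in> space ?P \<rightarrow> L" using pL by auto
    fix ps assume "ps \<in> L"
    define G where "G = {R. R \<subseteq> {..<n} \<times> {..<n} \<and> (\<exists>x'. c x' = R \<and> p x' = ps)}"
    have finG: "finite G" unfolding G_def by (rule finite_subset[of _ "Pow ({..<n} \<times> {..<n})"]) auto
    have "p -` {ps} \<inter> space ?P = (\<Union>R\<in>G. {x \<in> space ?P. c x = R})"
    proof (intro set_eqI iffI)
      fix x assume x: "x \<in> p -` {ps} \<inter> space ?P"
      have "c x \<in> G" unfolding G_def using x by (auto simp: c_def)
      then show "x \<in> (\<Union>R\<in>G. {x \<in> space ?P. c x = R})" using x by blast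
    next
      fix x assume "x \<in> (\<Union>R\<in>G. {x \<in> space ?P. c x = R})"
      then obtain x' where "x \<in> space ?P" "c x = c x'" "p x' = ps" unfolding G_def by blast
      then show "x \<in> p -` {ps} \<inter> space ?P" using cong[of x x'] by simp
    qed
    also have "\<dots> \<in> sets ?P" using finG cR unfolding G_def by (intro sets.finite_UN) auto
    finally show "p -` {ps} \<inter> space ?P \<in> sets ?P" .
  qed
  have eq: "norm_order N n = (\<lambda>x. \<lambda>i\<in>{..<n}. x (p x ! i))"
    unfolding norm_order_alt p_def by (rule refl)
  show ?thesis unfolding eq
  proof (rule measurable_restrict)
    fix i assume i: "i \<in> {..<n}"
    show "(\<lambda>x. x (p x ! i)) \<in> ?P \<rightarrow>\<^sub>M K"
    proof (rule measurable_compose_countable'[where f="\<lambda>ps x. x (ps ! i)" and I=L, OF _ pm])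
      fix ps assume "ps \<in> L"
      then have "ps ! i \<in> {..<n}" using i unfolding L_def by (auto dest!: nth_mem)
      then show "(\<lambda>x. x (ps ! i)) \<in> ?P \<rightarrow>\<^sub>M K" by (rule measurable_component_singleton)
    qed (rule countable_finite[OF finL])
  qed
qed

lemma PiM_comp_meas: "i \<in> I \<Longrightarrow> f \<in> borel_measurable M \<Longrightarrow> (\<lambda>x. f (x i)) \<in> borel_measurable (PiM I (\<lambda>_. M))"
  by (rule measurable_compose[OF measurable_component_singleton])

lemma PiM_tie_null_insert:
  fixes N :: "'a \<Rightarrow> real"
  assumes mu: "prob_space \<mu>" and Nm: "N \<in> borel_measurable \<mu>"
    and atom: "\<And>y. emeasure \<mu> {z \<in> space \<mu>. N z = y} = 0"
    and J: "finite J" "i \<notin> J" "j \<in> J"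
  shows "emeasure (PiM (insert i J) (\<lambda>_. \<mu>)) {x \<in> space (PiM (insert i J) (\<lambda>_. \<mu>)). N (x i) = N (x j)} = 0"
proof -
  interpret PS: product_sigma_finite "\<lambda>_::'i. \<mu>"
    unfolding product_sigma_finite_def using prob_space_imp_sigma_finite[OF mu] by simp
  let ?P = "PiM (insert i J) (\<lambda>_. \<mu>)"
  let ?S = "{x \<in> space ?P. N (x i) = N (x j)}"
  note [measurable] = Nm
  have m1: "(\<lambda>x. N (x i)) \<in> borel_measurable ?P" and m2: "(\<lambda>x. N (x j)) \<in> borel_measurable ?P"
    using J by (simp_all add: PiM_comp_meas Nm)
  have S: "?S \<in> sets ?P" by (rule borel_measurable_eq[OF m1 m2])
  have "emeasure ?P ?S = (\<integral>\<^sup>+ x. indicator ?S x \<partial>?P)" using S by simp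
  also have "\<dots> = (\<integral>\<^sup>+ x. (\<integral>\<^sup>+ z. indicator ?S (x(i := z)) \<partial>\<mu>) \<partial>PiM J (\<lambda>_. \<mu>))"
    using J S by (intro PS.product_nn_integral_insert) auto
  also have "\<dots> = (\<integral>\<^sup>+ x. 0 \<partial>PiM J (\<lambda>_. \<mu>))"
  proof (rule nn_integral_cong)
    fix x assume x: "x \<in> space (PiM J (\<lambda>_. \<mu>))"
    have "(\<integral>\<^sup>+ z. indicator ?S (x(i := z)) \<partial>\<mu>) = (\<integral>\<^sup>+ z. indicator {z \<in> space \<mu>. N z = N (x j)} z \<partial>\<mu>)"
    proof (rule nn_integral_cong)
      fix z assume z: "z \<in> space \<mu>"
      have "x(i := z) \<in> space ?P" using x z by (auto simp: space_PiM PiE_def extensional_def Pi_def)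
      then show "indicator ?S (x(i := z)) = indicator {z \<in> space \<mu>. N z = N (x j)} z"
        using z J by (auto simp: indicator_def)
    qed
    also have "\<dots> = 0" using atom by (simp add: Nm)
    finally show "(\<integral>\<^sup>+ z. indicator ?S (x(i := z)) \<partial>\<mu>) = 0" .
  qed
  also have "\<dots> = 0" by simp
  finally show ?thesis .
qed

lemma PiM_tie_null:
  fixes N :: "'a \<Rightarrow> real"
  assumes mu: "prob_space \<mu>" and Nm: "N \<in> borel_measurable \<mu>"
    and atom: "\<And>y. emeasure \<mu> {z \<in> space \<mu>. N z = y} = 0"
    and I: "finite I" "i \<in> I" "j \<in> I" "i \<noteq> j"
  shows "emeasure (PiM I (\<lambda>_. \<mu>)) {x \<in> space (PiM I (\<lambda>_. \<mu>)). N (x i) = N (x j)} = 0"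
  using PiM_tie_null_insert[OF mu Nm atom, of "I - {i}" i j] I by (simp add: insert_absorb)

lemma PiM_AE_distinct:
  fixes N :: "'a \<Rightarrow> real"
  assumes mu: "prob_space \<mu>" and Nm: "N \<in> borel_measurable \<mu>"
    and atom: "\<And>y. emeasure \<mu> {z \<in> space \<mu>. N z = y} = 0"
    and I: "finite I"
  shows "AE x in PiM I (\<lambda>_. \<mu>). \<forall>i\<in>I. \<forall>j\<in>I. i \<noteq> j \<longrightarrow> N (x i) \<noteq> N (x j)"
proof -
  note [measurable] = Nm
  have "AE x in PiM I (\<lambda>_. \<mu>). N (x i) \<noteq> N (x j)" if "i \<in> I" "j \<in> I" "i \<noteq> j" for i j
  proof (rule AE_I')
    have m1: "(\<lambda>x. N (x i)) \<in> borel_measurable (PiM I (\<lambda>_. \<mu>))" and m2: "(\<lambda>x. N (x j)) \<in> borel_measurable (PiM I (\<lambda>_. \<mu>))"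
      using that by (simp_all add: PiM_comp_meas Nm)
    show "{x \<in> space (PiM I (\<lambda>_. \<mu>)). N (x i) = N (x j)} \<in> null_sets (PiM I (\<lambda>_. \<mu>))"
      using PiM_tie_null[OF mu Nm atom I that] borel_measurable_eq[OF m1 m2] by (auto intro!: null_setsI)
  qed auto
  then show ?thesis using I
    by (intro AE_ball_countable'[OF _ countable_finite[OF I]] AE_impI) simp_all
qed

lemma PiM_sets_Emax:
  fixes N :: "'a \<Rightarrow> real"
  assumes Nm: "N \<in> borel_measurable \<mu>" and I: "finite I" "j \<in> I"
  shows "{x \<in> space (PiM I (\<lambda>_. \<mu>)). \<forall>i\<in>I. i \<noteq> j \<longrightarrow> N (x i) < N (x j)} \<in> sets (PiM I (\<lambda>_. \<mu>))"
proof -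
  let ?P = "PiM I (\<lambda>_. \<mu>)"
  have m: "(\<lambda>x. N (x i)) \<in> borel_measurable ?P" if "i \<in> I" for i
    using that by (simp add: PiM_comp_meas Nm)
  have "Measurable.pred ?P (\<lambda>x. \<forall>i\<in>I. i \<noteq> j \<longrightarrow> N (x i) < N (x j))"
    apply (intro pred_intros_finite I pred_intros_logic)
     apply (simp add: Measurable.pred_def)
    unfolding Measurable.pred_def by (rule borel_measurable_less[OF m m]) (simp_all add: I)
  then show ?thesis by (simp add: Measurable.pred_def)
qed

lemma PiM_sets_D:
  fixes N :: "'a \<Rightarrow> real"
  assumes Nm: "N \<in> borel_measurable \<mu>" and I: "finite I"
  shows "{x \<in> space (PiM I (\<lambda>_. \<mu>)). \<forall>i\<in>I. \<forall>j\<in>I. i \<noteq> j \<longrightarrow> N (x i) \<noteq> N (x j)} \<in> sets (PiM I (\<lambda>_. \<mu>))"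
proof -
  let ?P = "PiM I (\<lambda>_. \<mu>)"
  have m: "(\<lambda>x. N (x i)) \<in> borel_measurable ?P" if "i \<in> I" for i
    using that by (simp add: PiM_comp_meas Nm)
  have "Measurable.pred ?P (\<lambda>x. \<forall>i\<in>I. \<forall>j\<in>I. i \<noteq> j \<longrightarrow> N (x i) \<noteq> N (x j))"
    apply (intro pred_intros_finite I pred_intros_logic)
     apply (simp add: Measurable.pred_def)
    unfolding Measurable.pred_def by (rule borel_measurable_eq[OF m m]) simp_all
  then show ?thesis by (simp add: Measurable.pred_def)
qed

lemma PiM_swap_invariant:
  assumes mu: "prob_space \<mu>" and sig: "bij_betw \<sigma> {..<n} {..<n}"
    and S: "S \<in> sets (PiM {..<n} (\<lambda>_. \<mu>))"
  shows "emeasure (PiM {..<n} (\<lambda>_. \<mu>)) ((\<lambda>x. \<lambda>i\<in>{..<n}. x (\<sigma> i)) -` S \<inter> space (PiM {..<n} (\<lambda>_. \<mu>)))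
       = emeasure (PiM {..<n} (\<lambda>_. \<mu>)) S"
proof -
  let ?P = "PiM {..<n} (\<lambda>_. \<mu>)"
  let ?R = "\<lambda>x. \<lambda>i\<in>{..<n}. x (\<sigma> i)"
  have sp: "\<sigma> \<in> {..<n} \<rightarrow> {..<n}" "inj_on \<sigma> {..<n}" using sig by (auto simp: bij_betw_def)
  have d: "distr ?P ?P ?R = ?P"
    using distr_PiM_reindex[of "{..<n}" "\<lambda>_. \<mu>" \<sigma> "{..<n}", OF _ sp(2) sp(1)] mu
    by simp
  have Rm: "?R \<in> ?P \<rightarrow>\<^sub>M ?P"
    using sig by (intro measurable_restrict measurable_component_singleton) (auto simp: bij_betw_def)
  have "emeasure ?P S = emeasure (distr ?P ?P ?R) S" using d by simp
  also have "\<dots> = emeasure ?P (?R -` S \<inter> space ?P)" by (rule emeasure_distr[OF Rm S])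
  finally show ?thesis by simp
qed

lemma norm_order_restrict: "norm_order N n (restrict x {..<n}) = norm_order N n x"
proof -
  have "map (restrict x {..<n}) [0..<n] = map x [0..<n]" by simp
  then show ?thesis unfolding norm_order_def Let_def by (simp only:)
qed

lemma norm_order_undef: "i \<ge> n \<Longrightarrow> norm_order N n x i = undefined"
  unfolding norm_order_def Let_def by simp

lemma sets_Collect_mem: "f \<in> M \<rightarrow>\<^sub>M K \<Longrightarrow> A \<in> sets K \<Longrightarrow> {x\<in>space M. f x \<in> A} \<in> sets M"
proof -
  assume f: "f \<in> M \<rightarrow>\<^sub>M K" and A: "A \<in> sets K"
  have "{x\<in>space M. f x \<in> A} = f -` A \<inter> space M" by auto
  then show ?thesis using measurable_sets[OF f A] by simp
qed

lemma fubini_step: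
  fixes N :: "'a \<Rightarrow> real"
  assumes mu: "prob_space \<mu>" and Nm: "N \<in> borel_measurable \<mu>"
    and A: "A \<in> sets (PiM {..<m} (\<lambda>_. \<mu>))" and B: "B \<in> sets borel"
  shows "emeasure (PiM {..<Suc m} (\<lambda>_. \<mu>))
     {x\<in>space (PiM {..<Suc m} (\<lambda>_. \<mu>)). (\<forall>i\<in>{..<Suc m}. i \<noteq> m \<longrightarrow> N (x i) < N (x m))
        \<and> restrict (norm_order N (Suc m) x) {..<m} \<in> A \<and> N (norm_order N (Suc m) x m) \<in> B}
   = (\<integral>\<^sup>+ z. indicator B (N z) * emeasure (PiM {..<m} (\<lambda>_. \<mu>))
        {x \<in> space (PiM {..<m} (\<lambda>_. \<mu>)). norm_order N m x \<in> A \<and> (\<forall>i\<in>{..<m}. N (x i) < N z)} \<partial>\<mu>)"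
proof -
  interpret PS: product_sigma_finite "\<lambda>_::nat. \<mu>"
    unfolding product_sigma_finite_def using prob_space_imp_sigma_finite[OF mu] by simp
  let ?P = "PiM {..<Suc m} (\<lambda>_. \<mu>)"
  let ?Q = "PiM {..<m} (\<lambda>_. \<mu>)"
  have Qprob: "prob_space ?Q" using mu by (intro prob_space_PiM) auto
  interpret PQ: pair_sigma_finite ?Q \<mu>
    unfolding pair_sigma_finite_def using prob_space_imp_sigma_finite[OF mu] prob_space_imp_sigma_finite[OF Qprob] by simp
  define S where "S = {x\<in>space ?P. (\<forall>i\<in>{..<Suc m}. i \<noteq> m \<longrightarrow> N (x i) < N (x m))
        \<and> restrict (norm_order N (Suc m) x) {..<m} \<in> A \<and> N (norm_order N (Suc m) x m) \<in> B}"
  define T where "T z = {x \<in> space ?Q. norm_order N m x \<in> A \<and> (\<forall>i\<in>{..<m}. N (x i) < N z)}" for z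
  have smP: "norm_order N (Suc m) \<in> ?P \<rightarrow>\<^sub>M ?P" by (rule norm_order_measurable[OF Nm])
  have smQ: "norm_order N m \<in> ?Q \<rightarrow>\<^sub>M ?Q" by (rule norm_order_measurable[OF Nm])
  have S: "S \<in> sets ?P"
  proof -
    have "{x\<in>space ?P. \<forall>i\<in>{..<Suc m}. i \<noteq> m \<longrightarrow> N (x i) < N (x m)} \<in> sets ?P"
      by (rule PiM_sets_Emax[OF Nm]) auto
    moreover have "{x\<in>space ?P. restrict (norm_order N (Suc m) x) {..<m} \<in> A} \<in> sets ?P"
      by (rule sets_Collect_mem[OF measurable_compose[OF smP measurable_restrict_subset[of "{..<m}" "{..<Suc m}"]] A]) simp
    moreover have "{x\<in>space ?P. N (norm_order N (Suc m) x m) \<in> B} \<in> sets ?P"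
      by (rule sets_Collect_mem[OF measurable_compose[OF smP PiM_comp_meas[of m "{..<Suc m}" N \<mu>, OF _ Nm]] B]) simp
    moreover have "S = {x\<in>space ?P. \<forall>i\<in>{..<Suc m}. i \<noteq> m \<longrightarrow> N (x i) < N (x m)} \<inter>
        {x\<in>space ?P. restrict (norm_order N (Suc m) x) {..<m} \<in> A} \<inter>
        {x\<in>space ?P. N (norm_order N (Suc m) x m) \<in> B}" unfolding S_def by blast
    ultimately show ?thesis by (simp only:) (intro sets.Int)
  qed
  have Tm: "T z \<in> sets ?Q" for z
  proof -
    have m: "(\<lambda>x. N (x i)) \<in> borel_measurable ?Q" if "i \<in> {..<m}" for i
      using that by (simp add: PiM_comp_meas Nm)
    have "Measurable.pred ?Q (\<lambda>x. \<forall>i\<in>{..<m}. N (x i) < N z)"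
      apply (intro pred_intros_finite finite_lessThan)
      unfolding Measurable.pred_def by (rule borel_measurable_less[OF m]) simp_all
    moreover have "Measurable.pred ?Q (\<lambda>x. norm_order N m x \<in> A)"
      unfolding Measurable.pred_def by (rule sets_Collect_mem[OF smQ A])
    ultimately have "{x\<in>space ?Q. norm_order N m x \<in> A} \<inter> {x\<in>space ?Q. \<forall>i\<in>{..<m}. N (x i) < N z} \<in> sets ?Q"
      unfolding Measurable.pred_def by (intro sets.Int)
    moreover have "T z = {x\<in>space ?Q. norm_order N m x \<in> A} \<inter> {x\<in>space ?Q. \<forall>i\<in>{..<m}. N (x i) < N z}"
      unfolding T_def by blast
    ultimately show ?thesis by simp
  qed
  define G where "G = {p \<in> space (?Q \<Otimes>\<^sub>M \<mu>). N (snd p) \<in> B \<and> norm_order N m (fst p) \<in> A \<and> (\<forall>i\<in>{..<m}. N (fst p i) < N (snd p))}"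
  have G: "G \<in> sets (?Q \<Otimes>\<^sub>M \<mu>)"
  proof -
    let ?QM = "?Q \<Otimes>\<^sub>M \<mu>"
    have m1: "(\<lambda>p. N (snd p)) \<in> borel_measurable ?QM" by (rule measurable_compose[OF measurable_snd Nm])
    have m2: "(\<lambda>p. norm_order N m (fst p)) \<in> ?QM \<rightarrow>\<^sub>M ?Q" by (rule measurable_compose[OF measurable_fst smQ])
    have m3: "(\<lambda>p. N (fst p i)) \<in> borel_measurable ?QM" if "i \<in> {..<m}" for i
      by (rule measurable_compose[OF measurable_fst PiM_comp_meas[OF that Nm]])
    have "Measurable.pred ?QM (\<lambda>p. N (snd p) \<in> B)"
      unfolding Measurable.pred_def by (rule sets_Collect_mem[OF m1 B])
    moreover have "Measurable.pred ?QM (\<lambda>p. norm_order N m (fst p) \<in> A)"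
      unfolding Measurable.pred_def by (rule sets_Collect_mem[OF m2 A])
    moreover have "Measurable.pred ?QM (\<lambda>p. \<forall>i\<in>{..<m}. N (fst p i) < N (snd p))"
      apply (intro pred_intros_finite finite_lessThan)
      unfolding Measurable.pred_def by (rule borel_measurable_less[OF m3 m1])
    ultimately have "Measurable.pred ?QM (\<lambda>p. N (snd p) \<in> B \<and> norm_order N m (fst p) \<in> A \<and> (\<forall>i\<in>{..<m}. N (fst p i) < N (snd p)))"
      by (intro pred_intros_logic)
    then show ?thesis unfolding G_def Measurable.pred_def .
  qed
  have inner: "indicator S (x(m := z)) = indicator G (x, z)" if x: "x \<in> space ?Q" and z: "z \<in> space \<mu>" for x z
  proof -
    have xs: "x(m := z) \<in> space ?P" using x z by (auto simp: space_PiM PiE_iff extensional_def)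
    have xz: "(x, z) \<in> space (?Q \<Otimes>\<^sub>M \<mu>)" using x z by (simp add: space_pair_measure)
    have c1: "(\<forall>i\<in>{..<Suc m}. i \<noteq> m \<longrightarrow> N ((x(m := z)) i) < N ((x(m := z)) m)) \<longleftrightarrow> (\<forall>i\<in>{..<m}. N (x i) < N z)"
      by auto
    show ?thesis
    proof (cases "\<forall>i\<in>{..<m}. N (x i) < N z")
      case True
      have e: "norm_order N (Suc m) (x(m:=z)) = (\<lambda>i. if i < m then norm_order N m x i else if i = m then z else undefined)"
        by (rule norm_order_snoc) (use True in auto)
      have r: "restrict (norm_order N (Suc m) (x(m:=z))) {..<m} = norm_order N m x"
      proof (rule ext)
        fix i show "restrict (norm_order N (Suc m) (x(m:=z))) {..<m} i = norm_order N m x i"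
          by (cases "i < m") (simp_all add: e norm_order_undef)
      qed
      have v: "norm_order N (Suc m) (x(m:=z)) m = z" by (simp add: e)
      have "x(m := z) \<in> S \<longleftrightarrow> (x, z) \<in> G"
        unfolding S_def G_def using True xs xz c1 r v by auto
      then show ?thesis by (simp add: indicator_def)
    next
      case False
      have "x(m := z) \<notin> S" unfolding S_def using False c1 by blast
      moreover have "(x, z) \<notin> G" unfolding G_def using False by auto
      ultimately show ?thesis by (simp add: indicator_def)
    qed
  qed
  have "emeasure ?P S = (\<integral>\<^sup>+ x. indicator S x \<partial>?P)" using S by simp
  also have "\<dots> = (\<integral>\<^sup>+ x. (\<integral>\<^sup>+ z. indicator S (x(m := z)) \<partial>\<mu>) \<partial>?Q)"
    using PS.product_nn_integral_insert[of "{..<m}" m "indicator S"] S by (simp add: lessThan_Suc)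
  also have "\<dots> = (\<integral>\<^sup>+ x. (\<integral>\<^sup>+ z. indicator G (x, z) \<partial>\<mu>) \<partial>?Q)"
    by (intro nn_integral_cong) (simp add: inner)
  also have "\<dots> = (\<integral>\<^sup>+ z. (\<integral>\<^sup>+ x. indicator G (x, z) \<partial>?Q) \<partial>\<mu>)"
    using G by (intro PQ.Fubini'[symmetric]) simp
  also have "\<dots> = (\<integral>\<^sup>+ z. indicator B (N z) * emeasure ?Q (T z) \<partial>\<mu>)"
  proof (intro nn_integral_cong)
    fix z assume z: "z \<in> space \<mu>"
    have "(\<integral>\<^sup>+ x. indicator G (x, z) \<partial>?Q) = (\<integral>\<^sup>+ x. indicator B (N z) * indicator (T z) x \<partial>?Q)"
      using z by (intro nn_integral_cong) (auto simp: G_def T_def indicator_def space_pair_measure)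
    also have "\<dots> = indicator B (N z) * emeasure ?Q (T z)"
      using Tm by (simp add: nn_integral_cmult_indicator)
    finally show "(\<integral>\<^sup>+ x. indicator G (x, z) \<partial>?Q) = indicator B (N z) * emeasure ?Q (T z)" .
  qed
  finally show ?thesis unfolding S_def T_def .
qed

lemma strict_max_exists:
  fixes f :: "nat \<Rightarrow> real"
  assumes I: "finite I" "I \<noteq> {}" and d: "\<forall>i\<in>I. \<forall>j\<in>I. i \<noteq> j \<longrightarrow> f i \<noteq> f j"
  shows "\<exists>j\<in>I. \<forall>i\<in>I. i \<noteq> j \<longrightarrow> f i < f j"
proof -
  have "Max (f ` I) \<in> f ` I" using I by simp
  then obtain j where j: "j \<in> I" "f j = Max (f ` I)" by auto
  have "f i \<le> f j" if "i \<in> I" for i using I that j by simp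
  then show ?thesis using j d by (metis order_le_less)
qed

lemma PiM_strict_eq_nonstrict:
  fixes N :: "'a \<Rightarrow> real" and m :: nat
  assumes mu: "prob_space \<mu>" and Nm: "N \<in> borel_measurable \<mu>"
    and atom: "\<And>y. emeasure \<mu> {z \<in> space \<mu>. N z = y} = 0"
    and T1: "{x \<in> space (PiM {..<m} (\<lambda>_. \<mu>)). P x \<and> (\<forall>i\<in>{..<m}. N (x i) < y)} \<in> sets (PiM {..<m} (\<lambda>_. \<mu>))"
    and T2: "{x \<in> space (PiM {..<m} (\<lambda>_. \<mu>)). P x \<and> (\<forall>i\<in>{..<m}. N (x i) \<le> y)} \<in> sets (PiM {..<m} (\<lambda>_. \<mu>))"
  shows "emeasure (PiM {..<m} (\<lambda>_. \<mu>)) {x \<in> space (PiM {..<m} (\<lambda>_. \<mu>)). P x \<and> (\<forall>i\<in>{..<m}. N (x i) < y)}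
       = emeasure (PiM {..<m} (\<lambda>_. \<mu>)) {x \<in> space (PiM {..<m} (\<lambda>_. \<mu>)). P x \<and> (\<forall>i\<in>{..<m}. N (x i) \<le> y)}"
proof (rule emeasure_eq_AE[OF _ T1 T2])
  let ?Q = "PiM {..<m} (\<lambda>_. \<mu>)"
  interpret PP: product_prob_space "\<lambda>_::nat. \<mu>" "{..<m}"
    unfolding product_prob_space_def product_prob_space_axioms_def product_sigma_finite_def
    using mu prob_space_imp_sigma_finite[OF mu] by simp
  have "AE x in ?Q. N (x i) \<noteq> y" if i: "i \<in> {..<m}" for i
  proof (rule AE_I')
    have "{x \<in> space ?Q. N (x i) = y} = {x \<in> space ?Q. x i \<in> {z \<in> space \<mu>. N z = y}}"
      using i by (auto simp: space_PiM PiE_iff)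
    moreover have "{z \<in> space \<mu>. N z = y} \<in> sets \<mu>" using Nm by measurable
    ultimately have "emeasure ?Q {x \<in> space ?Q. N (x i) = y} = 0"
      using PP.emeasure_PiM_Collect_single[OF i, of "{z \<in> space \<mu>. N z = y}"] atom[of y] by (simp only:)
    moreover have "{x \<in> space ?Q. N (x i) = y} \<in> sets ?Q"
      by (rule borel_measurable_eq[OF PiM_comp_meas[OF i Nm]]) simp
    ultimately show "{x \<in> space ?Q. N (x i) = y} \<in> null_sets ?Q" by (auto intro: null_setsI)
  qed auto
  then have "AE x in ?Q. \<forall>i\<in>{..<m}. N (x i) \<noteq> y"
    by (intro AE_ball_countable') auto
  then show "AE x in ?Q. (x \<in> {x \<in> space ?Q. P x \<and> (\<forall>i\<in>{..<m}. N (x i) < y)}) =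
      (x \<in> {x \<in> space ?Q. P x \<and> (\<forall>i\<in>{..<m}. N (x i) \<le> y)})"
    by eventually_elim (auto simp: order_le_less)
qed

lemma core:
  fixes N :: "'a \<Rightarrow> real" and m :: nat
  assumes mu: "prob_space \<mu>" and Nm: "N \<in> borel_measurable \<mu>"
    and atom: "\<And>y. emeasure \<mu> {z \<in> space \<mu>. N z = y} = 0"
    and A: "A \<in> sets (PiM {..<m} (\<lambda>_. \<mu>))" and B: "B \<in> sets borel"
  shows "emeasure (PiM {..<Suc m} (\<lambda>_. \<mu>))
     {x\<in>space (PiM {..<Suc m} (\<lambda>_. \<mu>)). restrict (norm_order N (Suc m) x) {..<m} \<in> A \<and> N (norm_order N (Suc m) x m) \<in> B}
   = of_nat (Suc m) * (\<integral>\<^sup>+ z. indicator B (N z) * emeasure (PiM {..<m} (\<lambda>_. \<mu>))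
        {x \<in> space (PiM {..<m} (\<lambda>_. \<mu>)). norm_order N m x \<in> A \<and> (\<forall>i\<in>{..<m}. N (x i) \<le> N z)} \<partial>\<mu>)"
proof -
  let ?I = "{..<Suc m}"
  let ?P = "PiM ?I (\<lambda>_. \<mu>)"
  let ?Q = "PiM {..<m} (\<lambda>_. \<mu>)"
  define Ev where "Ev = {x\<in>space ?P. restrict (norm_order N (Suc m) x) {..<m} \<in> A \<and> N (norm_order N (Suc m) x m) \<in> B}"
  define E where "E j = {x \<in> space ?P. \<forall>i\<in>?I. i \<noteq> j \<longrightarrow> N (x i) < N (x j)}" for j
  define D where "D = {x \<in> space ?P. \<forall>i\<in>?I. \<forall>j\<in>?I. i \<noteq> j \<longrightarrow> N (x i) \<noteq> N (x j)}"
  have smP: "norm_order N (Suc m) \<in> ?P \<rightarrow>\<^sub>M ?P" by (rule norm_order_measurable[OF Nm])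
  have EvS: "Ev \<in> sets ?P"
  proof -
    have "{x\<in>space ?P. restrict (norm_order N (Suc m) x) {..<m} \<in> A} \<in> sets ?P"
      by (rule sets_Collect_mem[OF measurable_compose[OF smP measurable_restrict_subset[of "{..<m}" "{..<Suc m}"]] A]) simp
    moreover have "{x\<in>space ?P. N (norm_order N (Suc m) x m) \<in> B} \<in> sets ?P"
      by (rule sets_Collect_mem[OF measurable_compose[OF smP PiM_comp_meas[of m "{..<Suc m}" N \<mu>, OF _ Nm]] B]) simp
    moreover have "Ev = {x\<in>space ?P. restrict (norm_order N (Suc m) x) {..<m} \<in> A} \<inter> {x\<in>space ?P. N (norm_order N (Suc m) x m) \<in> B}"
      unfolding Ev_def by blast
    ultimately show ?thesis by (simp only:) (intro sets.Int)
  qed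
  have ES: "E j \<in> sets ?P" if "j \<in> ?I" for j
    unfolding E_def by (rule PiM_sets_Emax[OF Nm]) (use that in auto)
  have DS: "D \<in> sets ?P" unfolding D_def by (rule PiM_sets_D[OF Nm]) simp
  have AED: "AE x in ?P. x \<in> D"
    using PiM_AE_distinct[OF mu Nm atom, of ?I] unfolding D_def by (auto elim: AE_mp)
  have step1: "emeasure ?P Ev = emeasure ?P (\<Union>j\<in>?I. Ev \<inter> E j)"
  proof (rule emeasure_eq_AE)
    show "AE x in ?P. (x \<in> Ev) = (x \<in> (\<Union>j\<in>?I. Ev \<inter> E j))"
      using AED
    proof eventually_elim
      case (elim x)
      then have "\<exists>j\<in>?I. \<forall>i\<in>?I. i \<noteq> j \<longrightarrow> N (x i) < N (x j)"
        unfolding D_def by (intro strict_max_exists) auto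
      then show ?case using elim unfolding E_def D_def by auto
    qed
    show "Ev \<in> sets ?P" by (rule EvS)
    show "(\<Union>j\<in>?I. Ev \<inter> E j) \<in> sets ?P" using EvS ES by (intro sets.finite_UN) auto
  qed
  also have "\<dots> = (\<Sum>j\<in>?I. emeasure ?P (Ev \<inter> E j))"
  proof (rule sum_emeasure[symmetric])
    show "(\<lambda>j. Ev \<inter> E j) ` ?I \<subseteq> sets ?P" using EvS ES by auto
    show "disjoint_family_on (\<lambda>j. Ev \<inter> E j) ?I"
      unfolding disjoint_family_on_def
    proof (intro ballI impI)
      fix a b assume ab: "a \<in> ?I" "b \<in> ?I" "a \<noteq> b"
      show "Ev \<inter> E a \<inter> (Ev \<inter> E b) = {}"
      proof (rule equals0I)
        fix x assume "x \<in> Ev \<inter> E a \<inter> (Ev \<inter> E b)"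
        then have "N (x b) < N (x a)" "N (x a) < N (x b)" using ab unfolding E_def by auto
        then show False by simp
      qed
    qed
  qed simp
  also have "\<dots> = (\<Sum>j\<in>?I. emeasure ?P (Ev \<inter> E m))"
  proof (rule sum.cong[OF refl])
    fix j assume j: "j \<in> ?I"
    define \<sigma> where "\<sigma> i = (if i = j then m else if i = m then j else i)" for i
    have s1: "\<sigma> i \<in> ?I" if "i \<in> ?I" for i using that j by (auto simp: \<sigma>_def)
    have s2: "\<sigma> (\<sigma> i) = i" for i by (auto simp: \<sigma>_def)
    have s3: "\<sigma> m = j" "\<sigma> j = m" by (auto simp: \<sigma>_def)
    have s4: "\<sigma> i = m \<longleftrightarrow> i = j" for i by (auto simp: \<sigma>_def)
    have sig: "bij_betw \<sigma> ?I ?I"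
      by (rule bij_betw_byWitness[where f'=\<sigma>]) (use s1 s2 in auto)
    define R where "R x = (\<lambda>i\<in>?I. x (\<sigma> i))" for x :: "nat \<Rightarrow> 'a"
    have Rm: "R \<in> ?P \<rightarrow>\<^sub>M ?P"
      unfolding R_def using s1 by (intro measurable_restrict measurable_component_singleton) auto
    have key: "R x \<in> Ev \<inter> E m \<inter> D \<longleftrightarrow> x \<in> Ev \<inter> E j \<inter> D" if x: "x \<in> space ?P" for x
    proof -
      have yS: "R x \<in> space ?P" using measurable_space[OF Rm x] .
      have yv: "R x i = x (\<sigma> i)" if "i \<in> ?I" for i using that by (simp add: R_def)
      have hD0: "(\<forall>a\<in>?I. \<forall>b\<in>?I. a \<noteq> b \<longrightarrow> N (x (\<sigma> a)) \<noteq> N (x (\<sigma> b))) \<longleftrightarrow>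
                 (\<forall>a\<in>?I. \<forall>b\<in>?I. a \<noteq> b \<longrightarrow> N (x a) \<noteq> N (x b))"
        by (metis s1 s2)
      have hD: "R x \<in> D \<longleftrightarrow> x \<in> D" unfolding D_def using x yS yv hD0 by auto
      have hE0: "(\<forall>i\<in>?I. i \<noteq> m \<longrightarrow> N (x (\<sigma> i)) < N (x j)) \<longleftrightarrow>
                 (\<forall>i\<in>?I. i \<noteq> j \<longrightarrow> N (x i) < N (x j))"
        by (metis s1 s2 s4)
      have hE: "R x \<in> E m \<longleftrightarrow> x \<in> E j" unfolding E_def using x yS yv hE0 s3 j by auto
      have hEv: "R x \<in> Ev \<longleftrightarrow> x \<in> Ev" if xD: "x \<in> D"
      proof -
        have inj: "inj_on (\<lambda>i. N (x i)) ?I" using xD unfolding D_def inj_on_def by blast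
        have "norm_order N (Suc m) (R x) = norm_order N (Suc m) (\<lambda>i. x (\<sigma> i))"
          unfolding R_def by (rule norm_order_restrict)
        also have "\<dots> = norm_order N (Suc m) x" by (rule norm_order_perm[where N=N and x=x, OF inj sig])
        finally show ?thesis unfolding Ev_def using x yS by simp
      qed
      show ?thesis using hD hE hEv by blast
    qed
    have Ssets: "Ev \<inter> E m \<inter> D \<in> sets ?P" using EvS ES[of m] DS by auto
    have pre: "R -` (Ev \<inter> E m \<inter> D) \<inter> space ?P = Ev \<inter> E j \<inter> D"
      using key EvS DS sets.sets_into_space by blast
    have "emeasure ?P (Ev \<inter> E j) = emeasure ?P (Ev \<inter> E j \<inter> D)"
      using AED EvS ES[OF j] DS by (intro emeasure_eq_AE) auto
    also have "\<dots> = emeasure ?P (R -` (Ev \<inter> E m \<inter> D) \<inter> space ?P)" by (simp only: pre)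
    also have "\<dots> = emeasure ?P (Ev \<inter> E m \<inter> D)"
      unfolding R_def by (rule PiM_swap_invariant[OF mu sig Ssets])
    also have "\<dots> = emeasure ?P (Ev \<inter> E m)"
      using AED EvS ES[of m] DS by (intro emeasure_eq_AE) auto
    finally show "emeasure ?P (Ev \<inter> E j) = emeasure ?P (Ev \<inter> E m)" .
  qed
  also have "\<dots> = of_nat (Suc m) * emeasure ?P (Ev \<inter> E m)" by simp
  also have "emeasure ?P (Ev \<inter> E m) = (\<integral>\<^sup>+ z. indicator B (N z) * emeasure ?Q
        {x \<in> space ?Q. norm_order N m x \<in> A \<and> (\<forall>i\<in>{..<m}. N (x i) < N z)} \<partial>\<mu>)"
  proof -
    have "Ev \<inter> E m = {x\<in>space ?P. (\<forall>i\<in>{..<Suc m}. i \<noteq> m \<longrightarrow> N (x i) < N (x m))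
        \<and> restrict (norm_order N (Suc m) x) {..<m} \<in> A \<and> N (norm_order N (Suc m) x m) \<in> B}"
      unfolding Ev_def E_def by blast
    then show ?thesis using fubini_step[OF mu Nm A B] by simp
  qed
  also have "(\<integral>\<^sup>+ z. indicator B (N z) * emeasure ?Q
        {x \<in> space ?Q. norm_order N m x \<in> A \<and> (\<forall>i\<in>{..<m}. N (x i) < N z)} \<partial>\<mu>)
      = (\<integral>\<^sup>+ z. indicator B (N z) * emeasure ?Q
        {x \<in> space ?Q. norm_order N m x \<in> A \<and> (\<forall>i\<in>{..<m}. N (x i) \<le> N z)} \<partial>\<mu>)"
  proof (rule nn_integral_cong)
    fix z
    have smQ: "norm_order N m \<in> ?Q \<rightarrow>\<^sub>M ?Q" by (rule norm_order_measurable[OF Nm])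
    have m: "(\<lambda>x. N (x i)) \<in> borel_measurable ?Q" if "i \<in> {..<m}" for i
      using that by (simp add: PiM_comp_meas Nm)
    have p1: "Measurable.pred ?Q (\<lambda>x. norm_order N m x \<in> A)"
      unfolding Measurable.pred_def by (rule sets_Collect_mem[OF smQ A])
    have p2: "Measurable.pred ?Q (\<lambda>x. \<forall>i\<in>{..<m}. N (x i) < N z)"
      apply (intro pred_intros_finite finite_lessThan)
      unfolding Measurable.pred_def by (rule borel_measurable_less[OF m]) simp_all
    have p3: "Measurable.pred ?Q (\<lambda>x. \<forall>i\<in>{..<m}. N (x i) \<le> N z)"
      apply (intro pred_intros_finite finite_lessThan)
      unfolding Measurable.pred_def by (rule borel_measurable_le[OF m]) simp_all
    have "emeasure ?Q {x \<in> space ?Q. norm_order N m x \<in> A \<and> (\<forall>i\<in>{..<m}. N (x i) < N z)}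
        = emeasure ?Q {x \<in> space ?Q. norm_order N m x \<in> A \<and> (\<forall>i\<in>{..<m}. N (x i) \<le> N z)}"
      apply (rule PiM_strict_eq_nonstrict[OF mu Nm atom])
      using pred_intros_logic(3)[OF p1 p2] pred_intros_logic(3)[OF p1 p3] unfolding Measurable.pred_def by auto
    then show "indicator B (N z) * emeasure ?Q {x \<in> space ?Q. norm_order N m x \<in> A \<and> (\<forall>i\<in>{..<m}. N (x i) < N z)}
      = indicator B (N z) * emeasure ?Q {x \<in> space ?Q. norm_order N m x \<in> A \<and> (\<forall>i\<in>{..<m}. N (x i) \<le> N z)}"
      by simp
  qed
  finally show ?thesis unfolding Ev_def .
qed

lemma prod_indicator_ennreal:
  "finite I \<Longrightarrow> (\<Prod>i\<in>I. indicator (A i) (x i) :: ennreal) = (if \<forall>i\<in>I. x i \<in> A i then 1 else 0)"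
  by (induction I rule: finite_induct) (auto simp: indicator_def)

lemma trunc_law_density:
  fixes N :: "'a::topological_space \<Rightarrow> real"
  assumes M: "prob_space M" and Xp: "Xp \<in> borel_measurable M" and Nm: "N \<in> borel_measurable borel"
  defines "\<mu> \<equiv> distr M borel Xp"
  shows "trunc_law M Xp N y = density \<mu> (\<lambda>z. ennreal (indicator {z. N z \<le> y} z / measure \<mu> {z. N z \<le> y}))"
proof -
  let ?F = "measure \<mu> {z. N z \<le> y}"
  let ?h = "\<lambda>z. ennreal (indicator {z. N z \<le> y} z / ?F)"
  let ?D = "density \<mu> ?h"
  interpret prob_space M by (rule M)
  have sD: "sets ?D = sets borel" and spD: "space ?D = UNIV" by (simp_all add: \<mu>_def)
  have Ny: "{z. N z \<le> y} \<in> sets borel" using Nm by measurable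
  have eqB: "ennreal (measure M {w \<in> space M. Xp w \<in> B \<and> N (Xp w) \<le> y} / measure M {w \<in> space M. N (Xp w) \<le> y})
       = emeasure ?D B" if B: "B \<in> sets borel" for B
  proof -
    have BN: "B \<inter> {z. N z \<le> y} \<in> sets borel" using B Ny by auto
    have m1: "measure M {w \<in> space M. Xp w \<in> B \<and> N (Xp w) \<le> y} = measure \<mu> (B \<inter> {z. N z \<le> y})"
      unfolding \<mu>_def using BN Xp by (subst measure_distr) (auto intro: arg_cong2[where f=measure])
    have m2: "measure M {w \<in> space M. N (Xp w) \<le> y} = ?F"
      unfolding \<mu>_def using Ny Xp by (subst measure_distr) (auto intro: arg_cong2[where f=measure])
    have "emeasure ?D B = (\<integral>\<^sup>+ z. ?h z * indicator B z \<partial>\<mu>)"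
      using B Nm by (subst emeasure_density) (auto simp: \<mu>_def)
    also have "\<dots> = (\<integral>\<^sup>+ z. ennreal (1 / ?F) * indicator (B \<inter> {z. N z \<le> y}) z \<partial>\<mu>)"
      by (intro nn_integral_cong) (auto simp: indicator_def)
    also have "\<dots> = ennreal (1 / ?F) * emeasure \<mu> (B \<inter> {z. N z \<le> y})"
      using BN by (subst nn_integral_cmult_indicator) (auto simp: \<mu>_def)
    also have "\<dots> = ennreal (1 / ?F) * ennreal (measure \<mu> (B \<inter> {z. N z \<le> y}))"
    proof -
      interpret P: prob_space \<mu> unfolding \<mu>_def by (rule prob_space_distr[OF Xp])
      show ?thesis by (simp add: P.emeasure_eq_measure)
    qed
    also have "\<dots> = ennreal (measure \<mu> (B \<inter> {z. N z \<le> y}) / ?F)"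
      by (simp add: ennreal_mult'[symmetric] divide_inverse mult.commute)
    finally show ?thesis using m1 m2 by simp
  qed
  have "trunc_law M Xp N y = measure_of UNIV (sets borel) (emeasure ?D)"
    unfolding trunc_law_def
  proof (rule measure_of_eq)
    fix a :: "'a set" assume "a \<in> sigma_sets UNIV (sets borel)"
    moreover have "sigma_sets UNIV (sets (borel :: 'a measure)) = sets borel"
      using sets.sigma_sets_eq[of "borel :: 'a measure"] by simp
    ultimately have "a \<in> sets borel" by blast
    then show "ennreal (measure M {w \<in> space M. Xp w \<in> a \<and> N (Xp w) \<le> y} / measure M {w \<in> space M. N (Xp w) \<le> y})
       = emeasure ?D a" by (rule eqB)
  qed auto
  also have "\<dots> = ?D"
    using measure_of_of_measure[of ?D] by (simp only: sD spD)
  finally show ?thesis .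
qed

lemma trunc_prod_formula:
  fixes N :: "'a::topological_space \<Rightarrow> real" and m :: nat
  assumes M: "prob_space M" and Xp: "Xp \<in> borel_measurable M" and Nm: "N \<in> borel_measurable borel"
    and A: "A \<in> sets (PiM {..<m} (\<lambda>_. borel :: 'a measure))"
  shows "emeasure (distr (PiM {..<m} (\<lambda>_. trunc_law M Xp N y)) (PiM {..<m} (\<lambda>_. borel)) (norm_order N m)) A
   = ennreal ((1 / measure (distr M borel Xp) {z. N z \<le> y}) ^ m) *
     emeasure (PiM {..<m} (\<lambda>_. distr M borel Xp))
       {x \<in> space (PiM {..<m} (\<lambda>_. distr M borel Xp)). norm_order N m x \<in> A \<and> (\<forall>i\<in>{..<m}. N (x i) \<le> y)}"
proof -
  define \<mu> where "\<mu> = distr M borel Xp"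
  define F where "F = measure \<mu> {z. N z \<le> y}"
  define h where "h z = ennreal (indicator {z. N z \<le> y} z / F)" for z
  define D where "D = density \<mu> h"
  let ?Q = "PiM {..<m} (\<lambda>_. \<mu>)"
  define H where "H x = (\<Prod>i\<in>{..<m}. h (x i))" for x
  have mu: "prob_space \<mu>" unfolding \<mu>_def by (rule prob_space.prob_space_distr[OF M Xp])
  interpret mu: prob_space \<mu> by (rule mu)
  have smu: "sets \<mu> = sets borel" "space \<mu> = UNIV" by (simp_all add: \<mu>_def)
  have Nmu: "N \<in> borel_measurable \<mu>" using Nm by (simp add: measurable_cong_sets[OF smu(1) refl])
  have hm: "h \<in> borel_measurable \<mu>" unfolding h_def using Nmu by measurable
  have trunc: "trunc_law M Xp N y = D"
    unfolding D_def h_def F_def \<mu>_def by (rule trunc_law_density[OF M Xp Nm])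
  have sD: "sets D = sets \<mu>" "space D = UNIV" by (simp_all add: D_def smu)
  have Dfin: "sigma_finite_measure D"
  proof -
    have "emeasure D (space D) = (\<integral>\<^sup>+ z. h z * indicator (space D) z \<partial>\<mu>)"
      unfolding D_def by (rule emeasure_density[OF hm]) simp
    also have "\<dots> = (\<integral>\<^sup>+ z. h z \<partial>\<mu>)" by (simp only: sD(2) indicator_UNIV mult_1_right)
    also have "\<dots> \<le> (\<integral>\<^sup>+ z. ennreal (1 / F) \<partial>\<mu>)"
    proof (rule nn_integral_mono)
      fix z show "h z \<le> ennreal (1 / F)" unfolding h_def by (cases "N z \<le> y") (simp_all add: indicator_def)
    qed
    also have "\<dots> = ennreal (1 / F)" by (simp only: nn_integral_const mu.emeasure_space_1 mult_1_right)
    finally have "emeasure D (space D) \<le> ennreal (1 / F)" .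
    then have "emeasure D (space D) \<noteq> \<infinity>"
    proof (intro notI)
      assume le: "emeasure D (space D) \<le> ennreal (1 / F)" and inf: "emeasure D (space D) = \<infinity>"
      from le inf have "\<infinity> \<le> ennreal (1 / F)" by simp
      then show False by (simp add: top_unique)
    qed
    then have "finite_measure D" by (rule finite_measureI)
    then show ?thesis unfolding finite_measure_def by simp
  qed
  interpret PSmu: product_sigma_finite "\<lambda>_::nat. \<mu>"
    unfolding product_sigma_finite_def using prob_space_imp_sigma_finite[OF mu] by simp
  interpret PSD: product_sigma_finite "\<lambda>_::nat. D"
    unfolding product_sigma_finite_def using Dfin by simp
  have PD: "density ?Q H = PiM {..<m} (\<lambda>_. D)"
  proof (rule PSD.PiM_eqI)
    show "sets (density ?Q H) = sets (PiM {..<m} (\<lambda>_. D))"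
      by (simp add: sD(1) cong: sets_PiM_cong)
    fix A' assume A': "\<And>i. i \<in> {..<m} \<Longrightarrow> A' i \<in> sets D"
    have HQ: "H \<in> borel_measurable ?Q"
      unfolding H_def by (intro borel_measurable_prod_ennreal)
        (simp add: PiM_comp_meas hm)
    have PiA: "Pi\<^sub>E {..<m} A' \<in> sets ?Q" using A' sD by (intro sets_PiM_I_finite) auto
    have "emeasure (density ?Q H) (Pi\<^sub>E {..<m} A') = (\<integral>\<^sup>+ x. H x * indicator (Pi\<^sub>E {..<m} A') x \<partial>?Q)"
      using HQ PiA by (rule emeasure_density)
    also have "\<dots> = (\<integral>\<^sup>+ x. (\<Prod>i\<in>{..<m}. h (x i) * indicator (A' i) (x i)) \<partial>?Q)"
    proof (rule nn_integral_cong)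
      fix x assume x: "x \<in> space ?Q"
      have "indicator (Pi\<^sub>E {..<m} A') x = (\<Prod>i\<in>{..<m}. indicator (A' i) (x i) :: ennreal)"
        using x by (subst prod_indicator_ennreal) (auto simp: indicator_def space_PiM PiE_iff)
      then show "H x * indicator (Pi\<^sub>E {..<m} A') x = (\<Prod>i\<in>{..<m}. h (x i) * indicator (A' i) (x i))"
        unfolding H_def by (simp add: prod.distrib)
    qed
    also have "\<dots> = (\<Prod>i\<in>{..<m}. (\<integral>\<^sup>+ z. h z * indicator (A' i) z \<partial>\<mu>))"
      using A' sD hm by (intro PSmu.product_nn_integral_prod) auto
    also have "\<dots> = (\<Prod>i\<in>{..<m}. emeasure D (A' i))"
      using A' sD hm by (intro prod.cong refl) (simp add: D_def emeasure_density)
    finally show "emeasure (density ?Q H) (Pi\<^sub>E {..<m} A') = (\<Prod>i\<in>{..<m}. emeasure D (A' i))" .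
  qed simp
  have spQ: "space ?Q = space (PiM {..<m} (\<lambda>_. D))" "space ?Q = space (PiM {..<m} (\<lambda>_. borel :: 'a measure))"
    by (simp_all add: space_PiM smu sD)
  have sQ: "sets (PiM {..<m} (\<lambda>_. borel :: 'a measure)) = sets ?Q"
    by (rule sets_PiM_cong) (simp_all add: smu)
  have sQD: "sets (PiM {..<m} (\<lambda>_. D)) = sets ?Q"
    by (rule sets_PiM_cong) (simp_all add: sD)
  have AQ: "A \<in> sets ?Q" using A sQ by simp
  have ND: "N \<in> borel_measurable D" using Nm by (simp add: measurable_cong_sets[OF trans[OF sD(1) smu(1)] refl])
  have smD: "norm_order N m \<in> PiM {..<m} (\<lambda>_. D) \<rightarrow>\<^sub>M PiM {..<m} (\<lambda>_. borel)"
    using norm_order_measurable[OF ND, of m] by (simp add: measurable_cong_sets[OF refl trans[OF sQD sQ[symmetric]]])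
  have smQ: "norm_order N m \<in> ?Q \<rightarrow>\<^sub>M ?Q" by (rule norm_order_measurable[OF Nmu])
  define T where "T = {x \<in> space ?Q. norm_order N m x \<in> A \<and> (\<forall>i\<in>{..<m}. N (x i) \<le> y)}"
  have TS: "T \<in> sets ?Q"
  proof -
    have m: "(\<lambda>x. N (x i)) \<in> borel_measurable ?Q" if "i \<in> {..<m}" for i
      using that by (simp add: PiM_comp_meas Nmu)
    have p1: "Measurable.pred ?Q (\<lambda>x. norm_order N m x \<in> A)"
      unfolding Measurable.pred_def by (rule sets_Collect_mem[OF smQ AQ])
    have p3: "Measurable.pred ?Q (\<lambda>x. \<forall>i\<in>{..<m}. N (x i) \<le> y)"
      apply (intro pred_intros_finite finite_lessThan)
      unfolding Measurable.pred_def by (rule borel_measurable_le[OF m]) simp_all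
    show ?thesis using pred_intros_logic(3)[OF p1 p3] unfolding T_def Measurable.pred_def .
  qed
  have S: "norm_order N m -` A \<inter> space ?Q \<in> sets ?Q" using measurable_sets[OF smQ AQ] .
  have HQ: "H \<in> borel_measurable ?Q"
    unfolding H_def by (intro borel_measurable_prod_ennreal) (simp add: PiM_comp_meas hm)
  have "emeasure (distr (PiM {..<m} (\<lambda>_. trunc_law M Xp N y)) (PiM {..<m} (\<lambda>_. borel)) (norm_order N m)) A
      = emeasure (distr (PiM {..<m} (\<lambda>_. D)) (PiM {..<m} (\<lambda>_. borel)) (norm_order N m)) A"
    by (simp only: trunc)
  also have "\<dots> = emeasure (PiM {..<m} (\<lambda>_. D)) (norm_order N m -` A \<inter> space (PiM {..<m} (\<lambda>_. D)))"
    by (rule emeasure_distr[OF smD A])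
  also have "\<dots> = emeasure (density ?Q H) (norm_order N m -` A \<inter> space ?Q)"
    by (simp only: PD[symmetric] spQ(1)[symmetric] space_density)
  also have "\<dots> = (\<integral>\<^sup>+ x. H x * indicator (norm_order N m -` A \<inter> space ?Q) x \<partial>?Q)"
    by (rule emeasure_density[OF HQ S])
  also have "\<dots> = (\<integral>\<^sup>+ x. ennreal ((1 / F) ^ m) * indicator T x \<partial>?Q)"
  proof (rule nn_integral_cong)
    fix x assume x: "x \<in> space ?Q"
    show "H x * indicator (norm_order N m -` A \<inter> space ?Q) x = ennreal ((1 / F) ^ m) * indicator T x"
    proof (cases "\<forall>i\<in>{..<m}. N (x i) \<le> y")
      case True
      have "H x = (\<Prod>i\<in>{..<m}. ennreal (1 / F))"
        unfolding H_def h_def using True by (intro prod.cong refl) (simp add: indicator_def)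
      also have "\<dots> = ennreal ((1 / F) ^ m)" by (simp add: ennreal_power F_def)
      finally show ?thesis using True x unfolding T_def by (simp add: indicator_def)
    next
      case False
      then obtain i where i: "i \<in> {..<m}" "\<not> N (x i) \<le> y" by blast
      have "H x = 0" unfolding H_def h_def using i by (intro prod_zero) (auto simp: indicator_def)
      then show ?thesis using False unfolding T_def by (simp add: indicator_def)
    qed
  qed
  also have "\<dots> = ennreal ((1 / F) ^ m) * emeasure ?Q T" using TS by (rule nn_integral_cmult_indicator)
  finally show ?thesis unfolding T_def F_def \<mu>_def .
qed

lemma abs_cont_isCont:
  assumes "abs_continuous_fun F" shows "isCont F x"
proof -
  have "\<forall>r>0. \<exists>s>0. \<forall>x'. x' \<noteq> x \<and> norm (x' - x) < s \<longrightarrow> norm (F x' - F x) < r"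
  proof (intro allI impI)
    fix e :: real assume e: "e > 0"
    have "\<exists>d>0. \<forall>(m::nat) (a::nat \<Rightarrow> real) b.
        (\<forall>k<m. a k \<le> b k) \<and> (\<forall>k<m. \<forall>l<m. k \<noteq> l \<longrightarrow> b k \<le> a l \<or> b l \<le> a k)
        \<and> (\<Sum>k<m. b k - a k) < d \<longrightarrow> (\<Sum>k<m. \<bar>F (b k) - F (a k)\<bar>) < e"
      using assms e unfolding abs_continuous_fun_def by blast
    then obtain d where d: "d > 0" and H0: "\<forall>(m::nat) (a::nat \<Rightarrow> real) b.
        (\<forall>k<m. a k \<le> b k) \<and> (\<forall>k<m. \<forall>l<m. k \<noteq> l \<longrightarrow> b k \<le> a l \<or> b l \<le> a k)
        \<and> (\<Sum>k<m. b k - a k) < d \<longrightarrow> (\<Sum>k<m. \<bar>F (b k) - F (a k)\<bar>) < e"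
      by blast
    note H = H0[rule_format]
    show "\<exists>s>0. \<forall>x'. x' \<noteq> x \<and> norm (x' - x) < s \<longrightarrow> norm (F x' - F x) < e"
    proof (intro exI[of _ d] conjI allI impI)
      show "d > 0" by (rule d)
      fix x' assume x': "x' \<noteq> x \<and> norm (x' - x) < d"
      have "(\<Sum>k<(1::nat). \<bar>F ((\<lambda>_. max x x') k) - F ((\<lambda>_. min x x') k)\<bar>) < e"
        using x' by (intro H) (auto simp: abs_if split: if_splits)
      then show "norm (F x' - F x) < e" by (auto simp: max_def min_def abs_minus_commute split: if_splits)
    qed
  qed
  then show ?thesis unfolding isCont_def LIM_eq by simp
qed

lemma T_measurable:
  fixes N :: "'a \<Rightarrow> real" and m :: nat
  assumes mu: "prob_space \<mu>" and Nmu: "N \<in> borel_measurable \<mu>"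
    and AQ: "A \<in> sets (PiM {..<m} (\<lambda>_. \<mu>))"
  shows "(\<lambda>y. emeasure (PiM {..<m} (\<lambda>_. \<mu>)) {x \<in> space (PiM {..<m} (\<lambda>_. \<mu>)). norm_order N m x \<in> A \<and> (\<forall>i\<in>{..<m}. N (x i) \<le> y)})
     \<in> borel_measurable borel"
proof -
  let ?Q = "PiM {..<m} (\<lambda>_. \<mu>)"
  have Qprob: "prob_space ?Q" using mu by (intro prob_space_PiM) auto
  interpret Qs: sigma_finite_measure ?Q using prob_space_imp_sigma_finite[OF Qprob] .
  let ?BQ = "(borel :: real measure) \<Otimes>\<^sub>M ?Q"
  define G where "G = {p \<in> space ?BQ. norm_order N m (snd p) \<in> A \<and> (\<forall>i\<in>{..<m}. N (snd p i) \<le> fst p)}"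
  have smQ: "norm_order N m \<in> ?Q \<rightarrow>\<^sub>M ?Q" by (rule norm_order_measurable[OF Nmu])
  have GS: "G \<in> sets ?BQ"
  proof -
    have m2: "(\<lambda>p. norm_order N m (snd p)) \<in> ?BQ \<rightarrow>\<^sub>M ?Q" by (rule measurable_compose[OF measurable_snd smQ])
    have m3: "(\<lambda>p. N (snd p i)) \<in> borel_measurable ?BQ" if "i \<in> {..<m}" for i
      by (rule measurable_compose[OF measurable_snd PiM_comp_meas[OF that Nmu]])
    have m1: "(\<lambda>p. fst p) \<in> borel_measurable ?BQ" by (rule measurable_fst'') simp
    have p1: "Measurable.pred ?BQ (\<lambda>p. norm_order N m (snd p) \<in> A)"
      unfolding Measurable.pred_def by (rule sets_Collect_mem[OF m2 AQ])
    have p2: "Measurable.pred ?BQ (\<lambda>p. \<forall>i\<in>{..<m}. N (snd p i) \<le> fst p)"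
      apply (intro pred_intros_finite finite_lessThan)
      unfolding Measurable.pred_def by (rule borel_measurable_le[OF m3 m1]) simp_all
    show ?thesis using pred_intros_logic(3)[OF p1 p2] unfolding G_def Measurable.pred_def .
  qed
  have eq: "emeasure ?Q {x \<in> space ?Q. norm_order N m x \<in> A \<and> (\<forall>i\<in>{..<m}. N (x i) \<le> y)}
      = (\<integral>\<^sup>+ x. indicator G (y, x) \<partial>?Q)" for y
  proof -
    have S: "{x \<in> space ?Q. norm_order N m x \<in> A \<and> (\<forall>i\<in>{..<m}. N (x i) \<le> y)} \<in> sets ?Q"
    proof -
      have m: "(\<lambda>x. N (x i)) \<in> borel_measurable ?Q" if "i \<in> {..<m}" for i
        using that by (simp add: PiM_comp_meas Nmu)
      have p1: "Measurable.pred ?Q (\<lambda>x. norm_order N m x \<in> A)"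
        unfolding Measurable.pred_def by (rule sets_Collect_mem[OF smQ AQ])
      have p3: "Measurable.pred ?Q (\<lambda>x. \<forall>i\<in>{..<m}. N (x i) \<le> y)"
        apply (intro pred_intros_finite finite_lessThan)
        unfolding Measurable.pred_def by (rule borel_measurable_le[OF m]) simp_all
      show ?thesis using pred_intros_logic(3)[OF p1 p3] unfolding Measurable.pred_def .
    qed
    have "emeasure ?Q {x \<in> space ?Q. norm_order N m x \<in> A \<and> (\<forall>i\<in>{..<m}. N (x i) \<le> y)}
        = (\<integral>\<^sup>+ x. indicator {x \<in> space ?Q. norm_order N m x \<in> A \<and> (\<forall>i\<in>{..<m}. N (x i) \<le> y)} x \<partial>?Q)"
      using S by simp
    also have "\<dots> = (\<integral>\<^sup>+ x. indicator G (y, x) \<partial>?Q)"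
    proof (rule nn_integral_cong)
      fix x assume x: "x \<in> space ?Q"
      have iff: "(y, x) \<in> G \<longleftrightarrow> x \<in> {x \<in> space ?Q. norm_order N m x \<in> A \<and> (\<forall>i\<in>{..<m}. N (x i) \<le> y)}"
        unfolding G_def using x by (simp add: space_pair_measure)
      show "indicator {x \<in> space ?Q. norm_order N m x \<in> A \<and> (\<forall>i\<in>{..<m}. N (x i) \<le> y)} x = indicator G (y, x)"
        unfolding indicator_def using iff by (simp only: if_cong)
    qed
    finally show ?thesis .
  qed
  have "(\<lambda>y. \<integral>\<^sup>+ x. indicator G (y, x) \<partial>?Q) \<in> borel_measurable borel"
    by (rule Qs.borel_measurable_nn_integral) (simp add: borel_measurable_indicator[OF GS])
  then show ?thesis by (simp only: eq)
qed

lemma T_box: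
  fixes N :: "'a \<Rightarrow> real" and m :: nat
  assumes mu: "prob_space \<mu>" and Nmu: "N \<in> borel_measurable \<mu>" and sp: "space \<mu> = UNIV"
  shows "emeasure (PiM {..<m} (\<lambda>_. \<mu>)) {x \<in> space (PiM {..<m} (\<lambda>_. \<mu>)). norm_order N m x \<in> space (PiM {..<m} (\<lambda>_. \<mu>)) \<and> (\<forall>i\<in>{..<m}. N (x i) \<le> y)}
     = ennreal (measure \<mu> {z. N z \<le> y} ^ m)"
proof -
  let ?Q = "PiM {..<m} (\<lambda>_. \<mu>)"
  interpret mu: prob_space \<mu> by (rule mu)
  have smQ: "norm_order N m \<in> ?Q \<rightarrow>\<^sub>M ?Q" by (rule norm_order_measurable[OF Nmu])
  have Ny: "{z. N z \<le> y} \<in> sets \<mu>"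
  proof -
    have "{z \<in> space \<mu>. N z \<le> (\<lambda>_. y) z} \<in> sets \<mu>" by (intro borel_measurable_le Nmu measurable_const) simp
    then show ?thesis using sp by simp
  qed
  have "{x \<in> space ?Q. norm_order N m x \<in> space ?Q \<and> (\<forall>i\<in>{..<m}. N (x i) \<le> y)} = Pi\<^sub>E {..<m} (\<lambda>_. {z. N z \<le> y})"
  proof -
    have "{x \<in> space ?Q. norm_order N m x \<in> space ?Q \<and> (\<forall>i\<in>{..<m}. N (x i) \<le> y)} = {x \<in> space ?Q. \<forall>i\<in>{..<m}. N (x i) \<le> y}"
      using measurable_space[OF smQ] by blast
    also have "\<dots> = Pi\<^sub>E {..<m} (\<lambda>_. {z. N z \<le> y})"
      unfolding space_PiM sp PiE_def Pi_def by blast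
    finally show ?thesis .
  qed
  moreover have "emeasure ?Q (Pi\<^sub>E {..<m} (\<lambda>_. {z. N z \<le> y})) = (\<Prod>i\<in>{..<m}. emeasure \<mu> {z. N z \<le> y})"
  proof -
    interpret PSmu: product_sigma_finite "\<lambda>_::nat. \<mu>"
      unfolding product_sigma_finite_def using prob_space_imp_sigma_finite[OF mu] by simp
    show ?thesis using Ny by (intro PSmu.emeasure_PiM) auto
  qed
  moreover have "(\<Prod>i\<in>{..<m}. emeasure \<mu> {z. N z \<le> y}) = emeasure \<mu> {z. N z \<le> y} ^ m"
    by (simp only: prod_constant card_lessThan)
  moreover have "emeasure \<mu> {z. N z \<le> y} ^ m = ennreal (measure \<mu> {z. N z \<le> y} ^ m)"
    by (simp only: mu.emeasure_eq_measure ennreal_power measure_nonneg)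
  ultimately show ?thesis by (simp only:)
qed

lemma lemma2p1_Suc:
  fixes M :: "'w measure" and N :: "real ^ 'd \<Rightarrow> real" and m :: nat
    and X :: "nat \<Rightarrow> 'w \<Rightarrow> real ^ 'd" and Xp :: "'w \<Rightarrow> real ^ 'd"
  assumes Mp: "prob_space M"
    and norm: "is_norm N"
    and Xp: "Xp \<in> borel_measurable M"
    and ind: "prob_space.indep_vars M (\<lambda>_. borel) X {..<Suc m}"
    and dist: "\<forall>i<Suc m. distr M borel (X i) = distr M borel Xp"
    and ac: "abs_continuous_fun (cdf (distr M borel (\<lambda>w. N (Xp w))))"
  shows "\<forall>A \<in> sets (PiM {..<m} (\<lambda>_. borel :: (real ^ 'd) measure)). \<forall>B \<in> sets (borel :: real measure).
     (\<lambda>y. emeasure (distr (PiM {..<m} (\<lambda>_. trunc_law M Xp N y))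
                          (PiM {..<m} (\<lambda>_. borel)) (norm_order N m)) A)
       \<in> borel_measurable borel
   \<and> emeasure M {w \<in> space M.
        restrict (norm_order N (Suc m) (\<lambda>i. X i w)) {..<m} \<in> A
        \<and> N (norm_order N (Suc m) (\<lambda>i. X i w) m) \<in> B}
     = (\<integral>\<^sup>+ y \<in> B. emeasure (distr (PiM {..<m} (\<lambda>_. trunc_law M Xp N y))
                          (PiM {..<m} (\<lambda>_. borel)) (norm_order N m)) A
          \<partial>(distr M borel (\<lambda>w. N (norm_order N (Suc m) (\<lambda>i. X i w) m))))"
proof -
  interpret M: prob_space M by (rule Mp)
  define \<mu> where "\<mu> = distr M borel Xp"
  have mu: "prob_space \<mu>" unfolding \<mu>_def by (rule M.prob_space_distr[OF Xp])
  interpret mu: prob_space \<mu> by (rule mu)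
  have smu: "sets \<mu> = sets borel" "space \<mu> = UNIV" by (simp_all add: \<mu>_def)
  have Nb: "N \<in> borel_measurable borel" by (rule is_norm_measurable[OF norm])
  have Nmu: "N \<in> borel_measurable \<mu>" using Nb by (simp add: measurable_cong_sets[OF smu(1) refl])
  define L where "L = distr \<mu> borel N"
  have L_eq: "distr M borel (\<lambda>w. N (Xp w)) = L"
    unfolding L_def \<mu>_def using Xp Nb by (subst distr_distr) (auto simp: comp_def)
  interpret L: real_distribution L
    unfolding real_distribution_def real_distribution_axioms_def L_def
    using mu.prob_space_distr[OF Nmu] by simp
  have atom: "emeasure \<mu> {z \<in> space \<mu>. N z = y} = 0" for y
  proof -
    have "isCont (cdf L) y" using abs_cont_isCont[of _ y] ac L_eq by simp
    then have "measure L {y} = 0" using L.isCont_cdf by simp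
    then have "emeasure L {y} = 0" by (simp add: L.emeasure_eq_measure)
    moreover have "emeasure L {y} = emeasure \<mu> (N -` {y} \<inter> space \<mu>)"
      unfolding L_def by (rule emeasure_distr[OF Nmu]) simp
    moreover have "N -` {y} \<inter> space \<mu> = {z \<in> space \<mu>. N z = y}" by auto
    ultimately show ?thesis by simp
  qed
  let ?I = "{..<Suc m}"
  let ?P = "PiM ?I (\<lambda>_. \<mu>)"
  let ?Q = "PiM {..<m} (\<lambda>_. \<mu>)"
  let ?PB = "PiM ?I (\<lambda>_. borel :: (real ^ 'd) measure)"
  let ?QB = "PiM {..<m} (\<lambda>_. borel :: (real ^ 'd) measure)"
  have Xm: "X i \<in> borel_measurable M" if "i \<in> ?I" for i
    using ind that unfolding M.indep_vars_def by auto
  define J where "J w = (\<lambda>i\<in>?I. X i w)" for w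
  have joint: "distr M ?PB J = ?P"
  proof -
    have iff: "M.indep_vars (\<lambda>_. borel) X ?I \<longleftrightarrow>
        distr M ?PB (\<lambda>x. \<lambda>i\<in>?I. X i x) = PiM ?I (\<lambda>i. distr M borel (X i))"
      by (rule M.indep_vars_iff_distr_eq_PiM') (auto simp: Xm)
    have "distr M ?PB J = PiM ?I (\<lambda>i. distr M borel (X i))"
      using iff ind unfolding J_def by blast
    also have "\<dots> = ?P" by (rule PiM_cong) (simp_all add: dist \<mu>_def)
    finally show ?thesis .
  qed
  have Jm: "J \<in> M \<rightarrow>\<^sub>M ?PB" unfolding J_def by (intro measurable_restrict Xm)
  have sP: "sets ?PB = sets ?P" by (rule sets_PiM_cong) (simp_all add: smu)
  have sQ: "sets ?QB = sets ?Q" by (rule sets_PiM_cong) (simp_all add: smu)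
  have spP: "space ?PB = space ?P" by (simp add: space_PiM smu)
  have snP: "norm_order N (Suc m) \<in> ?P \<rightarrow>\<^sub>M ?P" by (rule norm_order_measurable[OF Nmu])
  have fmax: "(\<lambda>x. N (norm_order N (Suc m) x m)) \<in> borel_measurable ?P"
    by (rule measurable_compose[OF snP PiM_comp_meas[of m ?I N \<mu>, OF _ Nmu]]) simp
  have rmax: "(\<lambda>x. restrict (norm_order N (Suc m) x) {..<m}) \<in> ?P \<rightarrow>\<^sub>M ?Q"
    by (rule measurable_compose[OF snP measurable_restrict_subset]) auto
  have sJ: "norm_order N (Suc m) (\<lambda>i. X i w) = norm_order N (Suc m) (J w)" for w
    unfolding J_def by (rule norm_order_restrict[symmetric])
  define F where "F y = measure \<mu> {z. N z \<le> y}" for y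
  define T where "T A y = emeasure ?Q {x \<in> space ?Q. norm_order N m x \<in> A \<and> (\<forall>i\<in>{..<m}. N (x i) \<le> y)}" for A y
  define g where "g y = of_nat (Suc m) * ennreal (F y ^ m)" for y
  have Nle: "{z. N z \<le> y} \<in> sets \<mu>" for y
  proof -
    have "{z \<in> space \<mu>. N z \<le> (\<lambda>_. y) z} \<in> sets \<mu>" by (intro borel_measurable_le Nmu measurable_const) simp
    then show ?thesis using smu(2) by simp
  qed
  have Fm: "F \<in> borel_measurable borel"
  proof (rule borel_measurable_mono)
    show "mono F" unfolding mono_def F_def
    proof (intro allI impI)
      fix a b :: real assume "a \<le> b"
      then show "measure \<mu> {z. N z \<le> a} \<le> measure \<mu> {z. N z \<le> b}"
        by (intro mu.finite_measure_mono Nle) auto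
    qed
  qed
  have gm: "g \<in> borel_measurable borel" unfolding g_def using Fm by measurable
  have T_sets: "{x \<in> space ?Q. norm_order N m x \<in> A \<and> (\<forall>i\<in>{..<m}. N (x i) \<le> y)} \<in> sets ?Q" if AQ: "A \<in> sets ?Q" for A y
  proof -
    have smQ: "norm_order N m \<in> ?Q \<rightarrow>\<^sub>M ?Q" by (rule norm_order_measurable[OF Nmu])
    have m: "(\<lambda>x. N (x i)) \<in> borel_measurable ?Q" if "i \<in> {..<m}" for i
      using that by (simp add: PiM_comp_meas Nmu)
    have p1: "Measurable.pred ?Q (\<lambda>x. norm_order N m x \<in> A)"
      unfolding Measurable.pred_def by (rule sets_Collect_mem[OF smQ AQ])
    have p3: "Measurable.pred ?Q (\<lambda>x. \<forall>i\<in>{..<m}. N (x i) \<le> y)"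
      apply (intro pred_intros_finite finite_lessThan)
      unfolding Measurable.pred_def by (rule borel_measurable_le[OF m]) simp_all
    show ?thesis using pred_intros_logic(3)[OF p1 p3] unfolding Measurable.pred_def .
  qed
  have Tbox: "T (space ?Q) y = ennreal (F y ^ m)" for y
    unfolding T_def F_def by (rule T_box[OF mu Nmu smu(2)])
  have fmaxB: "(\<lambda>x. N (norm_order N (Suc m) x m)) \<in> borel_measurable ?PB"
    using fmax by (simp add: measurable_cong_sets[OF sP refl])
  have gL: "g \<in> borel_measurable L" using gm by (simp add: L_def)
  have Lmax: "distr M borel (\<lambda>w. N (norm_order N (Suc m) (\<lambda>i. X i w) m)) = density L g"
  proof -
    have "distr M borel (\<lambda>w. N (norm_order N (Suc m) (\<lambda>i. X i w) m))
        = distr M borel ((\<lambda>x. N (norm_order N (Suc m) x m)) \<circ> J)"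
      by (simp add: sJ comp_def)
    also have "\<dots> = distr (distr M ?PB J) borel (\<lambda>x. N (norm_order N (Suc m) x m))"
      by (rule distr_distr[OF fmaxB Jm, symmetric])
    also have "\<dots> = distr ?P borel (\<lambda>x. N (norm_order N (Suc m) x m))" by (simp only: joint)
    also have "\<dots> = density L g"
    proof (rule measure_eqI)
      show "sets (distr ?P borel (\<lambda>x. N (norm_order N (Suc m) x m))) = sets (density L g)"
        by (simp add: L_def)
      fix B' assume "B' \<in> sets (distr ?P borel (\<lambda>x. N (norm_order N (Suc m) x m)))"
      then have B': "B' \<in> sets borel" by simp
      have "emeasure (distr ?P borel (\<lambda>x. N (norm_order N (Suc m) x m))) B'
          = emeasure ?P ((\<lambda>x. N (norm_order N (Suc m) x m)) -` B' \<inter> space ?P)"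
        by (rule emeasure_distr[OF fmax B'])
      also have "(\<lambda>x. N (norm_order N (Suc m) x m)) -` B' \<inter> space ?P
          = {x\<in>space ?P. restrict (norm_order N (Suc m) x) {..<m} \<in> space ?Q \<and> N (norm_order N (Suc m) x m) \<in> B'}"
        using measurable_space[OF rmax] by blast
      also have "emeasure ?P \<dots> = of_nat (Suc m) * (\<integral>\<^sup>+ z. indicator B' (N z) * T (space ?Q) (N z) \<partial>\<mu>)"
        unfolding T_def by (rule core[OF mu Nmu atom sets.top B'])
      also have "\<dots> = of_nat (Suc m) * (\<integral>\<^sup>+ z. indicator B' (N z) * ennreal (F (N z) ^ m) \<partial>\<mu>)"
        by (simp only: Tbox)
      also have "\<dots> = (\<integral>\<^sup>+ z. of_nat (Suc m) * (indicator B' (N z) * ennreal (F (N z) ^ m)) \<partial>\<mu>)"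
        by (rule nn_integral_cmult[symmetric]) (use Fm B' Nmu in measurable)
      also have "\<dots> = (\<integral>\<^sup>+ z. g (N z) * indicator B' (N z) \<partial>\<mu>)"
        by (intro nn_integral_cong) (simp only: g_def mult.assoc mult.commute[of "indicator B' (N _)"])
      also have "\<dots> = (\<integral>\<^sup>+ y. g y * indicator B' y \<partial>L)"
        unfolding L_def by (rule nn_integral_distr[symmetric, OF Nmu]) (use gm B' in measurable)
      also have "\<dots> = emeasure (density L g) B'"
        by (rule emeasure_density[symmetric, OF gL]) (simp add: L_def B')
      finally show "emeasure (distr ?P borel (\<lambda>x. N (norm_order N (Suc m) x m))) B' = emeasure (density L g) B'" .
    qed
    finally show ?thesis .
  qed
  show ?thesis
  proof (intro ballI conjI)
    fix A B assume A: "A \<in> sets ?QB" and B: "B \<in> sets (borel :: real measure)"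
    have AQ: "A \<in> sets ?Q" using A sQ by simp
    define G where "G y = emeasure (distr (PiM {..<m} (\<lambda>_. trunc_law M Xp N y)) ?QB (norm_order N m)) A" for y
    have Geq: "G y = ennreal ((1 / F y) ^ m) * T A y" for y
      unfolding G_def T_def F_def \<mu>_def by (rule trunc_prod_formula[OF Mp Xp Nb A])
    have Tm: "(\<lambda>y. T A y) \<in> borel_measurable borel"
      unfolding T_def by (rule T_measurable[OF mu Nmu AQ])
    have Gm: "(\<lambda>y. G y) \<in> borel_measurable borel"
      unfolding Geq using Fm Tm by measurable
    then show "(\<lambda>y. emeasure (distr (PiM {..<m} (\<lambda>_. trunc_law M Xp N y)) ?QB (norm_order N m)) A) \<in> borel_measurable borel"
      unfolding G_def .
    have key: "ennreal (F y ^ m) * G y = T A y" for y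
    proof (cases "F y = 0")
      case True
      show ?thesis
      proof (cases m)
        case 0
        then show ?thesis by (simp add: Geq)
      next
        case (Suc k)
        have sub: "{x \<in> space ?Q. norm_order N m x \<in> A \<and> (\<forall>i\<in>{..<m}. N (x i) \<le> y)}
           \<subseteq> {x \<in> space ?Q. norm_order N m x \<in> space ?Q \<and> (\<forall>i\<in>{..<m}. N (x i) \<le> y)}"
          using AQ sets.sets_into_space by blast
        have "T A y \<le> T (space ?Q) y" unfolding T_def by (rule emeasure_mono[OF sub]) (rule T_sets[OF sets.top])
        then have "T A y = 0" using Tbox[of y] True Suc by simp
        then show ?thesis using True Suc by (simp add: Geq)
      qed
    next
      case False
      have Fpos: "F y > 0" using False by (simp add: F_def order_less_le)
      have h0: "F y * (1 / F y) = 1" using Fpos by simp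
      have h1: "F y ^ m * (1 / F y) ^ m = 1"
        by (simp only: power_mult_distrib[symmetric] h0 power_one)
      have "ennreal (F y ^ m) * ennreal ((1 / F y) ^ m) = ennreal (F y ^ m * (1 / F y) ^ m)"
        by (rule ennreal_mult[symmetric]) (use Fpos in simp_all)
      also have "\<dots> = 1" by (simp only: h1 ennreal_1)
      finally show ?thesis by (simp add: Geq mult.assoc[symmetric])
    qed
    define Ev where "Ev = {x\<in>space ?P. restrict (norm_order N (Suc m) x) {..<m} \<in> A \<and> N (norm_order N (Suc m) x m) \<in> B}"
    have EvS: "Ev \<in> sets ?P"
    proof -
      have "{x\<in>space ?P. restrict (norm_order N (Suc m) x) {..<m} \<in> A} \<in> sets ?P"
        by (rule sets_Collect_mem[OF rmax AQ])
      moreover have "{x\<in>space ?P. N (norm_order N (Suc m) x m) \<in> B} \<in> sets ?P"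
        by (rule sets_Collect_mem[OF fmax B])
      moreover have "Ev = {x\<in>space ?P. restrict (norm_order N (Suc m) x) {..<m} \<in> A} \<inter> {x\<in>space ?P. N (norm_order N (Suc m) x m) \<in> B}"
        unfolding Ev_def by blast
      ultimately show ?thesis by (simp only:) (intro sets.Int)
    qed
    have "emeasure M {w \<in> space M. restrict (norm_order N (Suc m) (\<lambda>i. X i w)) {..<m} \<in> A
          \<and> N (norm_order N (Suc m) (\<lambda>i. X i w) m) \<in> B} = emeasure M (J -` Ev \<inter> space M)"
    proof -
      have "{w \<in> space M. restrict (norm_order N (Suc m) (\<lambda>i. X i w)) {..<m} \<in> A
          \<and> N (norm_order N (Suc m) (\<lambda>i. X i w) m) \<in> B} = J -` Ev \<inter> space M"
        using measurable_space[OF Jm] spP unfolding Ev_def sJ by blast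
      then show ?thesis by simp
    qed
    also have "\<dots> = emeasure (distr M ?PB J) Ev"
      by (rule emeasure_distr[OF Jm, symmetric]) (simp add: sP EvS)
    also have "\<dots> = emeasure ?P Ev" by (simp only: joint)
    also have "\<dots> = of_nat (Suc m) * (\<integral>\<^sup>+ z. indicator B (N z) * T A (N z) \<partial>\<mu>)"
      unfolding Ev_def T_def by (rule core[OF mu Nmu atom AQ B])
    also have "\<dots> = (\<integral>\<^sup>+ z. of_nat (Suc m) * (indicator B (N z) * T A (N z)) \<partial>\<mu>)"
      by (rule nn_integral_cmult[symmetric]) (use Tm B Nmu in measurable)
    also have "\<dots> = (\<integral>\<^sup>+ z. g (N z) * (G (N z) * indicator B (N z)) \<partial>\<mu>)"
    proof (rule nn_integral_cong)
      fix z
      have "g (N z) * (G (N z) * indicator B (N z)) = of_nat (Suc m) * ((ennreal (F (N z) ^ m) * G (N z)) * indicator B (N z))"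
        unfolding g_def by (simp only: mult.assoc)
      also have "\<dots> = of_nat (Suc m) * (indicator B (N z) * T A (N z))"
        by (simp only: key mult.commute[of "T A (N z)"])
      finally show "of_nat (Suc m) * (indicator B (N z) * T A (N z)) = g (N z) * (G (N z) * indicator B (N z))" by simp
    qed
    also have "\<dots> = (\<integral>\<^sup>+ y. g y * (G y * indicator B y) \<partial>L)"
      unfolding L_def by (rule nn_integral_distr[symmetric, OF Nmu]) (use gm Gm B in measurable)
    also have "\<dots> = (\<integral>\<^sup>+ y. G y * indicator B y \<partial>density L g)"
      by (rule nn_integral_density[symmetric, OF gL]) (use Gm B in \<open>simp add: L_def\<close>)
    also have "\<dots> = (\<integral>\<^sup>+ y. G y * indicator B y \<partial>distr M borel (\<lambda>w. N (norm_order N (Suc m) (\<lambda>i. X i w) m)))"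
      by (simp only: Lmax)
    finally show "emeasure M {w \<in> space M. restrict (norm_order N (Suc m) (\<lambda>i. X i w)) {..<m} \<in> A
          \<and> N (norm_order N (Suc m) (\<lambda>i. X i w) m) \<in> B}
     = (\<integral>\<^sup>+ y \<in> B. emeasure (distr (PiM {..<m} (\<lambda>_. trunc_law M Xp N y)) ?QB (norm_order N m)) A
          \<partial>(distr M borel (\<lambda>w. N (norm_order N (Suc m) (\<lambda>i. X i w) m))))"
      unfolding G_def .
  qed
qed

theorem lemma2p1:
  fixes M :: "'w measure" and N :: "real ^ 'd \<Rightarrow> real" and n :: nat
    and X :: "nat \<Rightarrow> 'w \<Rightarrow> real ^ 'd" and Xp :: "'w \<Rightarrow> real ^ 'd"
  assumes "prob_space M"
    and "is_norm N"
    and "n \<ge> 1"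
    and "Xp \<in> borel_measurable M"
    and "prob_space.indep_vars M (\<lambda>_. borel) X {..<n}"
    and "\<forall>i<n. distr M borel (X i) = distr M borel Xp"
    and "abs_continuous_fun (cdf (distr M borel (\<lambda>w. N (Xp w))))"
  shows "\<forall>A \<in> sets (PiM {..<n-1} (\<lambda>_. borel :: (real ^ 'd) measure)). \<forall>B \<in> sets (borel :: real measure).
     (\<lambda>y. emeasure (distr (PiM {..<n-1} (\<lambda>_. trunc_law M Xp N y))
                          (PiM {..<n-1} (\<lambda>_. borel)) (norm_order N (n-1))) A)
       \<in> borel_measurable borel
   \<and> emeasure M {w \<in> space M.
        restrict (norm_order N n (\<lambda>i. X i w)) {..<n-1} \<in> A
        \<and> N (norm_order N n (\<lambda>i. X i w) (n-1)) \<in> B}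
     = (\<integral>\<^sup>+ y \<in> B. emeasure (distr (PiM {..<n-1} (\<lambda>_. trunc_law M Xp N y))
                          (PiM {..<n-1} (\<lambda>_. borel)) (norm_order N (n-1))) A
          \<partial>(distr M borel (\<lambda>w. N (norm_order N n (\<lambda>i. X i w) (n-1)))))"
proof -
  obtain m where nm: "n = Suc m" using assms(3) by (cases n) auto
  show ?thesis
    unfolding nm diff_Suc_1
    by (rule lemma2p1_Suc[OF assms(1,2,4) assms(5,6)[unfolded nm] assms(7)])
qed

end
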